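(* Let $\mathbf{s}$ be an automatic sequence for which there is a constant $c$ such that every prefix of $\mathbf{s}$ has a string attractor of size at most $c$. Then the functions $f(n):=\mathrm{maxspan}(\mathbf{s}[0..n-1])$ and $g(n):=\mathrm{minspan}(\mathbf{s}[0..n-1])$ are synchronized: there is a finite automaton recognizing the (parallel, padded) representations of the pairs $(n,f(n))$, and one recognizing the representations of the pairs $(n,g(n))$, in the numeration system of $\mathbf{s}$.
   Context: A numeration system represents each natural number uniquely as a word over a finite alphabet; it is regular if the set of representations is regular and the relation $z=x+y$ is recognizable by a finite automaton reading representations in parallel. A sequence $\mathbf{s}=(s_n)_{n\ge0}$ is automatic if there is a regular numeration system and a finite automaton that on input the representation of $n$ outputs $s_n$. A string attractor of a finite word $w=w[0..n-1]$ is a set $S\subseteq\{0,\ldots,n-1\}$ such that every nonempty factor of $w$ has an occurrence $w[p..q]$ with $p\le i\le q$ for some $i\in S$. The span of a finite set $S=\{i_1<\cdots<i_k\}$ is $i_k-i_1$. For a finite word $x$, $\mathrm{maxspan}(x)$ and $\mathrm{minspan}(x)$ are the maximum and minimum span among all string attractors of $x$ of minimum cardinality. *)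

theory Defs
  imports Main
begin

definition regular_lang :: "'a list set \<Rightarrow> bool" where
  "regular_lang L \<longleftrightarrow>
     (\<exists>(Q::nat set) q0 (\<delta>::nat \<Rightarrow> 'a \<Rightarrow> nat) F.
        finite Q \<and> q0 \<in> Q \<and> (\<forall>q\<in>Q. \<forall>a. \<delta> q a \<in> Q) \<and> F \<subseteq> Q \<and>
        L = {w. foldl \<delta> q0 w \<in> F})"

text \<open>Words are read most significant digit first; shorter words are padded on the left
with a padding symbol (None) up to the common length.\<close>

definition padl :: "nat \<Rightarrow> 'd list \<Rightarrow> 'd option list" where
  "padl m u = replicate (m - length u) None @ map Some u"

definition pair_word :: "'d list \<Rightarrow> 'd list \<Rightarrow> ('d option \<times> 'd option) list" where
  "pair_word u v = (let m = max (length u) (length v) in zip (padl m u) (padl m v))"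

definition triple_word ::
  "'d list \<Rightarrow> 'd list \<Rightarrow> 'd list \<Rightarrow> ('d option \<times> 'd option \<times> 'd option) list" where
  "triple_word u v w = (let m = max (length u) (max (length v) (length w)) in
      zip (padl m u) (zip (padl m v) (padl m w)))"

text \<open>A numeration system over the finite digit alphabet 'd is a map rep assigning to every
natural number its (unique) representation; uniqueness = injectivity.\<close>

definition regular_numeration :: "(nat \<Rightarrow> 'd::finite list) \<Rightarrow> bool" where
  "regular_numeration rep \<longleftrightarrow>
     inj rep \<and> regular_lang (range rep) \<and>
     regular_lang {triple_word (rep x) (rep y) (rep z) | x y z. z = x + y}"

definition automatic_wrt :: "(nat \<Rightarrow> 'd::finite list) \<Rightarrow> (nat \<Rightarrow> 'b) \<Rightarrow> bool" where
  "automatic_wrt rep s \<longleftrightarrow>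
     (\<exists>(Q::nat set) q0 (\<delta>::nat \<Rightarrow> 'd \<Rightarrow> nat) (\<tau>::nat \<Rightarrow> 'b).
        finite Q \<and> q0 \<in> Q \<and> (\<forall>q\<in>Q. \<forall>a. \<delta> q a \<in> Q) \<and>
        (\<forall>n. s n = \<tau> (foldl \<delta> q0 (rep n))))"

definition synchronized :: "(nat \<Rightarrow> 'd::finite list) \<Rightarrow> (nat \<Rightarrow> nat) \<Rightarrow> bool" where
  "synchronized rep f \<longleftrightarrow> regular_lang {pair_word (rep n) (rep (f n)) | n. True}"

definition string_attractor :: "'b list \<Rightarrow> nat set \<Rightarrow> bool" where
  "string_attractor w S \<longleftrightarrow> S \<subseteq> {..<length w} \<and>
     (\<forall>i l. 0 < l \<and> i + l \<le> length w \<longrightarrow>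
        (\<exists>p k. k \<in> S \<and> p \<le> k \<and> k < p + l \<and> p + l \<le> length w \<and>
               take l (drop p w) = take l (drop i w)))"

definition gamma :: "'b list \<Rightarrow> nat" where
  "gamma w = (LEAST c. \<exists>S. string_attractor w S \<and> card S = c)"

definition span :: "nat set \<Rightarrow> nat" where
  "span S = (if S = {} then 0 else Max S - Min S)"

definition maxspan :: "'b list \<Rightarrow> nat" where
  "maxspan w = Max {span S | S. string_attractor w S \<and> card S = gamma w}"

definition minspan :: "'b list \<Rightarrow> nat" where
  "minspan w = Min {span S | S. string_attractor w S \<and> card S = gamma w}"

definition prefix_of_seq :: "(nat \<Rightarrow> 'b) \<Rightarrow> nat \<Rightarrow> 'b list" where
  "prefix_of_seq s n = map s [0..<n]"

end

theory Submission
  imports Defs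
begin


lemma foldl_closed:
  assumes "\<forall>q\<in>Q. \<forall>a. \<delta> q a \<in> Q" "q \<in> Q"
  shows "foldl \<delta> q w \<in> Q"
  using assms(2) by (induction w arbitrary: q) (auto simp: assms(1))

lemma regI:
  fixes \<delta> :: "'q \<Rightarrow> 'a \<Rightarrow> 'q"
  assumes fin: "finite Q" and q0: "q0 \<in> Q" and cl: "\<forall>q\<in>Q. \<forall>a. \<delta> q a \<in> Q"
  shows "regular_lang {w. foldl \<delta> q0 w \<in> F}"
proof -
  obtain f :: "'q \<Rightarrow> nat" and n where fQ: "f ` Q = {i. i < n}" and inj: "inj_on f Q"
    using finite_imp_inj_to_nat_seg[OF fin] by blast
  define g where "g = inv_into Q f"
  define \<delta>' where "\<delta>' i a = f (\<delta> (g i) a)" for i a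
  have gf: "g (f q) = q" if "q \<in> Q" for q using inj that by (simp add: g_def)
  have key: "foldl \<delta>' (f q) w = f (foldl \<delta> q w)" if "q \<in> Q" for q w
    using that
  proof (induction w arbitrary: q)
    case Nil then show ?case by simp
  next
    case (Cons a w)
    have "foldl \<delta>' (f q) (a # w) = foldl \<delta>' (f (\<delta> q a)) w"
      using Cons.prems gf by (simp add: \<delta>'_def)
    also have "\<dots> = f (foldl \<delta> (\<delta> q a) w)" using Cons cl by blast
    finally show ?case by simp
  qed
  have inQ: "foldl \<delta> q0 w \<in> Q" for w using foldl_closed[OF cl q0] .
  have L: "{w. foldl \<delta> q0 w \<in> F} = {w. foldl \<delta>' (f q0) w \<in> f ` (F \<inter> Q)}"
  proof -
    have "foldl \<delta>' (f q0) w \<in> f ` (F \<inter> Q) \<longleftrightarrow> foldl \<delta> q0 w \<in> F" for w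
      using key[OF q0] inQ[of w] inj by (auto simp: inj_on_def)
    then show ?thesis by auto
  qed
  show ?thesis unfolding regular_lang_def L
    apply (rule exI[of _ "f ` Q"], rule exI[of _ "f q0"], rule exI[of _ \<delta>'], rule exI[of _ "f ` (F \<inter> Q)"])
    using fin q0 cl gf by (auto simp: \<delta>'_def g_def inv_into_into)
qed

lemma regE:
  assumes "regular_lang L"
  obtains Q q0 and \<delta> :: "nat \<Rightarrow> 'a \<Rightarrow> nat" and F where "finite Q" "q0 \<in> Q" "\<forall>q\<in>Q. \<forall>a. \<delta> q a \<in> Q"
    "L = {w. foldl \<delta> q0 w \<in> F}"
  using assms unfolding regular_lang_def by blast

lemma reg_compl: assumes "regular_lang L" shows "regular_lang (- L)"
proof -
  obtain Q q0 and \<delta> :: "nat \<Rightarrow> 'a \<Rightarrow> nat" and F where A: "finite Q" "q0 \<in> Q" "\<forall>q\<in>Q. \<forall>a. \<delta> q a \<in> Q"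
    "L = {w. foldl \<delta> q0 w \<in> F}" using regE[OF assms] by blast
  have "- L = {w. foldl \<delta> q0 w \<in> - F}" using A(4) by auto
  then show ?thesis using regI[OF A(1-3), of "- F"] by simp
qed

lemma foldl_prod:
  "foldl (\<lambda>(p, q) a. (\<delta>1 p a, \<delta>2 q a)) (p, q) w = (foldl \<delta>1 p w, foldl \<delta>2 q w)"
  by (induction w arbitrary: p q) auto

lemma reg_inter: assumes "regular_lang L1" "regular_lang L2" shows "regular_lang (L1 \<inter> L2)"
proof -
  obtain Q1 q1 and \<delta>1 :: "nat \<Rightarrow> 'a \<Rightarrow> nat" and F1 where A: "finite Q1" "q1 \<in> Q1" "\<forall>q\<in>Q1. \<forall>a. \<delta>1 q a \<in> Q1"
    "L1 = {w. foldl \<delta>1 q1 w \<in> F1}" using regE[OF assms(1)] by blast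
  obtain Q2 q2 and \<delta>2 :: "nat \<Rightarrow> 'a \<Rightarrow> nat" and F2 where B: "finite Q2" "q2 \<in> Q2" "\<forall>q\<in>Q2. \<forall>a. \<delta>2 q a \<in> Q2"
    "L2 = {w. foldl \<delta>2 q2 w \<in> F2}" using regE[OF assms(2)] by blast
  have "regular_lang {w. foldl (\<lambda>(p, q) a. (\<delta>1 p a, \<delta>2 q a)) (q1, q2) w \<in> F1 \<times> F2}"
    by (rule regI[of "Q1 \<times> Q2"]) (use A B in auto)
  moreover have "{w. foldl (\<lambda>(p, q) a. (\<delta>1 p a, \<delta>2 q a)) (q1, q2) w \<in> F1 \<times> F2} = L1 \<inter> L2"
    unfolding foldl_prod A(4) B(4) by auto
  ultimately show ?thesis by simp
qed

lemma reg_union: assumes "regular_lang L1" "regular_lang L2" shows "regular_lang (L1 \<union> L2)"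
proof -
  have "L1 \<union> L2 = - (- L1 \<inter> - L2)" by auto
  then show ?thesis using assms reg_compl reg_inter by metis
qed

lemma reg_diff: assumes "regular_lang L1" "regular_lang L2" shows "regular_lang (L1 - L2)"
  using reg_inter[OF assms(1) reg_compl[OF assms(2)]] by (simp add: Diff_eq)

lemma reg_empty: "regular_lang {}"
proof -
  have "regular_lang {w. foldl (\<lambda>q a. q) (0::nat) w \<in> {}}" by (rule regI[of "{0}"]) auto
  then show ?thesis by simp
qed

lemma reg_UNIV: "regular_lang UNIV"
  using reg_compl[OF reg_empty] by simp


lemma reg_vimage: assumes "regular_lang L" shows "regular_lang {w. map h w \<in> L}"
proof -
  obtain Q q0 and \<delta> :: "nat \<Rightarrow> 'a \<Rightarrow> nat" and F where A: "finite Q" "q0 \<in> Q" "\<forall>q\<in>Q. \<forall>a. \<delta> q a \<in> Q"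
    "L = {w. foldl \<delta> q0 w \<in> F}" using regE[OF assms] by blast
  have e: "foldl (\<lambda>q b. \<delta> q (h b)) q w = foldl \<delta> q (map h w)" for q w
    by (induction w arbitrary: q) auto
  have "regular_lang {w. foldl (\<lambda>q b. \<delta> q (h b)) q0 w \<in> F}" by (rule regI[of Q]) (use A in auto)
  then show ?thesis unfolding e A(4) by simp
qed

lemma reg_image: assumes "regular_lang L" shows "regular_lang (map h ` L)"
proof -
  obtain Q q0 and \<delta> :: "nat \<Rightarrow> 'a \<Rightarrow> nat" and F where A: "finite Q" "q0 \<in> Q" "\<forall>q\<in>Q. \<forall>a. \<delta> q a \<in> Q"
    "L = {w. foldl \<delta> q0 w \<in> F}" using regE[OF assms] by blast
  define \<delta>' where "\<delta>' P b = {\<delta> q a | q a. q \<in> P \<and> h a = b}" for P b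
  have e: "foldl \<delta>' P v = {foldl \<delta> q w | q w. q \<in> P \<and> map h w = v}" for P v
  proof (induction v arbitrary: P)
    case Nil then show ?case by auto
  next
    case (Cons b v)
    have "foldl \<delta>' P (b # v) = {foldl \<delta> q w | q w. q \<in> \<delta>' P b \<and> map h w = v}" using Cons by simp
    also have "\<dots> = {foldl \<delta> q w | q w. q \<in> P \<and> map h w = b # v}"
      unfolding \<delta>'_def
    proof (intro set_eqI iffI)
      fix x assume "x \<in> {foldl \<delta> q w |q w. q \<in> {\<delta> q a |q a. q \<in> P \<and> h a = b} \<and> map h w = v}"
      then obtain q a w where "x = foldl \<delta> (\<delta> q a) w" "q \<in> P" "h a = b" "map h w = v" by blast
      then show "x \<in> {foldl \<delta> q w |q w. q \<in> P \<and> map h w = b # v}"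
        by (intro CollectI exI[of _ q] exI[of _ "a # w"]) auto
    next
      fix x assume "x \<in> {foldl \<delta> q w |q w. q \<in> P \<and> map h w = b # v}"
      then obtain q w where "x = foldl \<delta> q w" "q \<in> P" "map h w = b # v" unfolding mem_Collect_eq by (elim exE conjE) metis
      then obtain a w' where "w = a # w'" "h a = b" "map h w' = v" by (auto simp: Cons_eq_map_conv)
      then show "x \<in> {foldl \<delta> q w |q w. q \<in> {\<delta> q a |q a. q \<in> P \<and> h a = b} \<and> map h w = v}"
        using \<open>x = foldl \<delta> q w\<close> \<open>q \<in> P\<close> by auto
    qed
    finally show ?case .
  qed
  have "regular_lang {v. foldl \<delta>' {q0} v \<in> {P. P \<inter> F \<noteq> {}}}"
    by (rule regI[of "Pow Q"]) (use A in \<open>auto simp: \<delta>'_def\<close>)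
  moreover have "{v. foldl \<delta>' {q0} v \<in> {P. P \<inter> F \<noteq> {}}} = map h ` L"
  proof (intro set_eqI iffI)
    fix v assume "v \<in> {v. foldl \<delta>' {q0} v \<in> {P. P \<inter> F \<noteq> {}}}"
    then obtain w where "map h w = v" "foldl \<delta> q0 w \<in> F" unfolding e by blast
    then show "v \<in> map h ` L" unfolding A(4) by blast
  next
    fix v assume "v \<in> map h ` L"
    then obtain w where "map h w = v" "foldl \<delta> q0 w \<in> F" unfolding A(4) by blast
    then have "foldl \<delta> q0 w \<in> foldl \<delta>' {q0} v \<inter> F" unfolding e by blast
    then show "v \<in> {v. foldl \<delta>' {q0} v \<in> {P. P \<inter> F \<noteq> {}}}" by blast
  qed
  ultimately show ?thesis by simp
qed


lemma reg_quot: assumes "regular_lang L" shows "regular_lang {v. \<exists>a. replicate a z @ v \<in> L}"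
proof -
  obtain Q q0 and \<delta> :: "nat \<Rightarrow> 'a \<Rightarrow> nat" and F where A: "finite Q" "q0 \<in> Q" "\<forall>q\<in>Q. \<forall>a. \<delta> q a \<in> Q"
    "L = {w. foldl \<delta> q0 w \<in> F}" using regE[OF assms] by blast
  define \<delta>' where "\<delta>' P b = (\<lambda>q. \<delta> q b) ` P" for P b
  have e: "foldl \<delta>' P v = (\<lambda>q. foldl \<delta> q v) ` P" for P v
    by (induction v arbitrary: P) (auto simp: \<delta>'_def image_image)
  define P0 where "P0 = range (\<lambda>a. foldl \<delta> q0 (replicate a z))"
  have "P0 \<subseteq> Q" unfolding P0_def using foldl_closed[OF A(3,2)] by auto
  then have "regular_lang {v. foldl \<delta>' P0 v \<in> {P. P \<inter> F \<noteq> {}}}"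
    by (intro regI[of "Pow Q"]) (use A in \<open>auto simp: \<delta>'_def\<close>)
  moreover have "{v. foldl \<delta>' P0 v \<in> {P. P \<inter> F \<noteq> {}}} = {v. \<exists>a. replicate a z @ v \<in> L}"
    unfolding e A(4) P0_def by auto
  ultimately show ?thesis by simp
qed

lemma reg_padcl:
  assumes "regular_lang L" "\<forall>v\<in>L. v = [] \<or> hd v \<noteq> z"
  shows "regular_lang {replicate a z @ v | a v. v \<in> L}"
proof -
  obtain Q q0 and \<delta> :: "nat \<Rightarrow> 'a \<Rightarrow> nat" and F where A: "finite Q" "q0 \<in> Q" "\<forall>q\<in>Q. \<forall>a. \<delta> q a \<in> Q"
    "L = {w. foldl \<delta> q0 w \<in> F}" using regE[OF assms(1)] by blast
  define \<delta>' where "\<delta>' x b = (case x of None \<Rightarrow> (if b = z then None else Some (\<delta> q0 b)) | Some q \<Rightarrow> Some (\<delta> q b))" for x b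
  define F' where "F' = Some ` F \<union> (if q0 \<in> F then {None} else {})"
  have rep: "foldl \<delta>' None (replicate a z @ v) = foldl \<delta>' None v" for a v
    by (induction a) (auto simp: \<delta>'_def)
  have sm: "foldl \<delta>' (Some q) v = Some (foldl \<delta> q v)" for q v
    by (induction v arbitrary: q) (auto simp: \<delta>'_def)
  have nv: "foldl \<delta>' None v = (if v = [] then None else Some (foldl \<delta> q0 v))" if "v = [] \<or> hd v \<noteq> z" for v
    using that by (cases v) (auto simp: \<delta>'_def sm)
  have "regular_lang {w. foldl \<delta>' None w \<in> F'}"
    by (rule regI[of "insert None (Some ` Q)"]) (use A in \<open>auto simp: \<delta>'_def split: option.splits\<close>)
  moreover have "{w. foldl \<delta>' None w \<in> F'} = {replicate a z @ v | a v. v \<in> L}"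
  proof (intro set_eqI iffI)
    fix w assume "w \<in> {w. foldl \<delta>' None w \<in> F'}"
    then have w: "foldl \<delta>' None w \<in> F'" by simp
    define a where "a = length (takeWhile (\<lambda>x. x = z) w)"
    define v where "v = dropWhile (\<lambda>x. x = z) w"
    have tw: "takeWhile (\<lambda>x. x = z) w = replicate a z"
      unfolding a_def by (rule replicate_length_same[symmetric]) (auto dest: set_takeWhileD)
    have wv: "w = replicate a z @ v" using takeWhile_dropWhile_id[of "\<lambda>x. x = z" w] tw v_def by simp
    have hv: "v = [] \<or> hd v \<noteq> z" using hd_dropWhile[of "\<lambda>x. x=z" w] v_def by auto
    have "foldl \<delta>' None v \<in> F'" using w rep[of a v] wv by simp
    then have "v \<in> L" using nv[OF hv] unfolding F'_def A(4) by (auto split: if_splits)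
    then show "w \<in> {replicate a z @ v | a v. v \<in> L}" using wv by blast
  next
    fix w assume "w \<in> {replicate a z @ v | a v. v \<in> L}"
    then obtain a v where wv: "w = replicate a z @ v" and v: "v \<in> L" by blast
    have "foldl \<delta>' None v \<in> F'" using nv assms(2) v unfolding F'_def A(4) by auto
    then show "w \<in> {w. foldl \<delta>' None w \<in> F'}" using wv rep by simp
  qed
  ultimately show ?thesis by simp
qed


definition track :: "nat \<Rightarrow> 'a list list \<Rightarrow> 'a list" where
  "track j w = map (\<lambda>c. c ! j) w"

lemma padl_len[simp]: "length u \<le> m \<Longrightarrow> length (padl m u) = m"
  by (simp add: padl_def)

lemma unpad: "map the (filter (\<lambda>x. x \<noteq> None) (padl m u)) = u"
  by (simp add: padl_def filter_map comp_def)

lemma padl_inj: "padl m u = padl m v \<Longrightarrow> u = v"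
  by (metis unpad)

lemma padl_add: "length u \<le> m \<Longrightarrow> replicate a None @ padl m u = padl (a + m) u"
  by (simp add: padl_def replicate_add[symmetric])

lemma padl_somes: "length (filter (\<lambda>x. x \<noteq> None) (padl m u)) = length u"
  by (simp add: padl_def filter_map comp_def)

lemma word_ext:
  assumes "length w = length w'" "\<forall>c\<in>set w. length c = k" "\<forall>c\<in>set w'. length c = k"
    "\<forall>j<k. track j w = track j w'"
  shows "w = w'"
proof (rule nth_equalityI)
  show "length w = length w'" by fact
  fix i assume i: "i < length w"
  show "w ! i = w' ! i"
  proof (rule nth_equalityI)
    show "length (w ! i) = length (w' ! i)" using assms(1-3) i by (simp add: nth_mem)
    fix j assume "j < length (w ! i)"
    then have j: "j < k" using assms(2) i by (simp add: nth_mem)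
    have "track j w ! i = track j w' ! i" using assms(4) j by simp
    then show "w ! i ! j = w' ! i ! j" using i assms(1) by (simp add: track_def)
  qed
qed

lemma track_append: "track j (u @ v) = track j u @ track j v"
  by (simp add: track_def)

lemma track_replicate: "j < k \<Longrightarrow> track j (replicate a (replicate k x)) = replicate a x"
  by (simp add: track_def)

locale nsys =
  fixes rep :: "nat \<Rightarrow> 'd::finite list"
  assumes inj: "inj rep" and rng: "regular_lang (range rep)"
    and addr: "regular_lang {triple_word (rep x) (rep y) (rep z) | x y z. z = x + y}"
begin

definition encm :: "nat \<Rightarrow> nat list \<Rightarrow> 'd option list list" where
  "encm m xs = map (\<lambda>i. map (\<lambda>x. padl m (rep x) ! i) xs) [0..<m]"

definition ml :: "nat \<Rightarrow> nat list \<Rightarrow> bool" where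
  "ml m xs \<longleftrightarrow> (\<forall>x\<in>set xs. length (rep x) \<le> m)"

definition lang :: "nat \<Rightarrow> (nat list \<Rightarrow> bool) \<Rightarrow> 'd option list list set" where
  "lang k P = {encm m xs | m xs. length xs = k \<and> ml m xs \<and> P xs}"

definition rrel :: "nat \<Rightarrow> (nat list \<Rightarrow> bool) \<Rightarrow> bool" where
  "rrel k P \<longleftrightarrow> regular_lang (lang k P)"

lemma encm_len[simp]: "length (encm m xs) = m"
  by (simp add: encm_def)

lemma encm_col: "\<forall>c\<in>set (encm m xs). length c = length xs"
  by (auto simp: encm_def)

lemma encm_nth: "i < m \<Longrightarrow> encm m xs ! i = map (\<lambda>x. padl m (rep x) ! i) xs"
  by (simp add: encm_def)

lemma encm_track: "j < length xs \<Longrightarrow> ml m xs \<Longrightarrow> track j (encm m xs) = padl m (rep (xs ! j))"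
  by (intro nth_equalityI) (auto simp: track_def encm_nth ml_def nth_mem)

lemma encm_inj:
  assumes "encm m xs = encm m' ys" "length xs = length ys" "ml m xs" "ml m' ys"
  shows "m = m' \<and> xs = ys"
proof -
  have mm: "m = m'" using arg_cong[OF assms(1), of length] by simp
  have "xs = ys"
  proof (rule nth_equalityI)
    show "length xs = length ys" by fact
    fix j assume j: "j < length xs"
    have "padl m (rep (xs ! j)) = padl m (rep (ys ! j))"
      using encm_track[OF j assms(3)] encm_track[of j ys m' ] j assms mm by simp
    then show "xs ! j = ys ! j" using inj padl_inj by (metis injD)
  qed
  with mm show ?thesis by simp
qed

lemma lang_iff:
  assumes "ml m xs" "length xs = k"
  shows "encm m xs \<in> lang k P \<longleftrightarrow> P xs"
proof
  assume "encm m xs \<in> lang k P"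
  then obtain m' ys where "encm m xs = encm m' ys" "length ys = k" "ml m' ys" "P ys"
    unfolding lang_def by blast
  then show "P xs" using encm_inj assms by metis
next
  assume "P xs" then show "encm m xs \<in> lang k P" using assms unfolding lang_def by blast
qed

lemma lang_memE:
  assumes "w \<in> lang k P"
  obtains m xs where "w = encm m xs" "length xs = k" "ml m xs" "P xs"
  using assms unfolding lang_def by blast

lemma rrel_cong:
  assumes "rrel k P" "\<And>xs. length xs = k \<Longrightarrow> P xs = Q xs"
  shows "rrel k Q"
proof -
  have "lang k P = lang k Q" unfolding lang_def using assms(2) by blast
  then show ?thesis using assms(1) unfolding rrel_def by simp
qed

definition PL :: "'d option list set" where
  "PL = {replicate a None @ v | a v. v \<in> map Some ` range rep}"

lemma PL_reg: "regular_lang PL"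
  unfolding PL_def
  by (rule reg_padcl) (auto intro: reg_image rng simp: hd_map)

lemma cols_reg: "regular_lang {w :: 'a list list. \<forall>c\<in>set w. length c = k}"
proof -
  have e: "foldl (\<lambda>q c. q \<and> length c = k) q w = (q \<and> (\<forall>c\<in>set w. length c = k))" for q and w :: "'a list list"
    by (induction w arbitrary: q) auto
  have "regular_lang {w :: 'a list list. foldl (\<lambda>q c. q \<and> length c = k) True w \<in> {True}}"
    by (rule regI[of UNIV]) auto
  then show ?thesis unfolding e by simp
qed

lemma tracks_reg: "regular_lang {w. \<forall>j<k. track j w \<in> PL}"
proof (induction k)
  case 0 then show ?case using reg_UNIV by simp
next
  case (Suc k)
  have "{w. \<forall>j<Suc k. track j w \<in> PL} = {w. \<forall>j<k. track j w \<in> PL} \<inter> {w. map (\<lambda>c. c ! k) w \<in> PL}"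
    by (auto simp: track_def less_Suc_eq)
  then show ?case using reg_inter[OF Suc reg_vimage[OF PL_reg]] by simp
qed

lemma padl_PL: "length (rep x) \<le> m \<Longrightarrow> padl m (rep x) \<in> PL"
  unfolding PL_def padl_def by blast

lemma PL_padl: assumes "v \<in> PL" shows "\<exists>x. length (rep x) \<le> length v \<and> v = padl (length v) (rep x)"
proof -
  obtain a x where "v = replicate a None @ map Some (rep x)" using assms unfolding PL_def by blast
  then show ?thesis by (intro exI[of _ x]) (simp add: padl_def)
qed

lemma valid_eq: "lang k (\<lambda>_. True) = {w. (\<forall>c\<in>set w. length c = k) \<and> (\<forall>j<k. track j w \<in> PL)}"
proof (intro set_eqI iffI)
  fix w assume "w \<in> lang k (\<lambda>_. True)"
  then obtain m xs where "w = encm m xs" "length xs = k" "ml m xs" by (auto elim: lang_memE)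
  then show "w \<in> {w. (\<forall>c\<in>set w. length c = k) \<and> (\<forall>j<k. track j w \<in> PL)}"
    using encm_col encm_track padl_PL by (auto simp: ml_def nth_mem)
next
  fix w assume "w \<in> {w. (\<forall>c\<in>set w. length c = k) \<and> (\<forall>j<k. track j w \<in> PL)}"
  then have c: "\<forall>c\<in>set w. length c = k" and t: "\<forall>j<k. track j w \<in> PL" by auto
  have "\<forall>j<k. \<exists>x. length (rep x) \<le> length w \<and> track j w = padl (length w) (rep x)"
    using t PL_padl by (metis length_map track_def)
  then obtain f where f: "\<forall>j<k. length (rep (f j)) \<le> length w \<and> track j w = padl (length w) (rep (f j))"
    by metis
  define xs where "xs = map f [0..<k]"
  have mlx: "ml (length w) xs" using f by (auto simp: ml_def xs_def)
  have wx: "w = encm (length w) xs"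
    by (rule word_ext[of _ _ k]) (use c f mlx encm_col in \<open>auto simp: xs_def encm_track\<close>)
  show "w \<in> lang k (\<lambda>_. True)" using mlx wx unfolding lang_def
    by (intro CollectI exI[of _ "length w"] exI[of _ xs]) (auto simp: xs_def)
qed

lemma rrel_true: "rrel k (\<lambda>_. True)"
  unfolding rrel_def valid_eq
  using reg_inter[OF cols_reg tracks_reg] by (simp add: Collect_conj_eq)

lemma lang_sub: "lang k P \<subseteq> lang k (\<lambda>_. True)"
  unfolding lang_def by blast

lemma valid_dec: "w \<in> lang k (\<lambda>_. True) \<Longrightarrow> \<exists>m xs. w = encm m xs \<and> length xs = k \<and> ml m xs"
  unfolding lang_def by blast

lemma lang_ext:
  assumes "\<And>m xs. length xs = k \<Longrightarrow> ml m xs \<Longrightarrow> encm m xs \<in> A \<longleftrightarrow> P xs"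
    and "A \<subseteq> lang k (\<lambda>_. True)"
  shows "lang k P = A"
proof (intro set_eqI iffI)
  fix w assume "w \<in> lang k P"
  then show "w \<in> A" using assms(1) by (auto elim!: lang_memE)
next
  fix w assume "w \<in> A"
  then obtain m xs where "w = encm m xs" "length xs = k" "ml m xs" using assms(2) valid_dec by blast
  then show "w \<in> lang k P" using assms(1) \<open>w \<in> A\<close> lang_iff by blast
qed

lemma rrel_not: "rrel k P \<Longrightarrow> rrel k (\<lambda>xs. \<not> P xs)"
proof -
  assume "rrel k P"
  have "lang k (\<lambda>xs. \<not> P xs) = lang k (\<lambda>_. True) - lang k P"
    by (rule lang_ext) (auto simp: lang_iff)
  then show ?thesis using reg_diff rrel_true \<open>rrel k P\<close> unfolding rrel_def by metis
qed

lemma rrel_and: "rrel k P \<Longrightarrow> rrel k Q \<Longrightarrow> rrel k (\<lambda>xs. P xs \<and> Q xs)"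
proof -
  assume a: "rrel k P" "rrel k Q"
  have "lang k (\<lambda>xs. P xs \<and> Q xs) = lang k P \<inter> lang k Q"
    by (rule lang_ext) (use lang_sub in \<open>auto simp: lang_iff\<close>)
  then show ?thesis using reg_inter a unfolding rrel_def by metis
qed

lemma rrel_or: "rrel k P \<Longrightarrow> rrel k Q \<Longrightarrow> rrel k (\<lambda>xs. P xs \<or> Q xs)"
proof -
  assume a: "rrel k P" "rrel k Q"
  have "lang k (\<lambda>xs. P xs \<or> Q xs) = lang k P \<union> lang k Q"
    by (rule lang_ext) (use lang_sub in \<open>auto simp: lang_iff\<close>)
  then show ?thesis using reg_union a unfolding rrel_def by metis
qed

lemma rrel_false: "rrel k (\<lambda>_. False)"
proof -
  have "lang k (\<lambda>_. False) = {}" by (auto simp: lang_def)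
  then show ?thesis using reg_empty unfolding rrel_def by simp
qed

end


context nsys begin

lemma map_butlast_encm: "map butlast (encm m (xs @ [x])) = encm m xs"
  by (simp add: encm_def)

lemma encm_col_len: "c \<in> set (encm m xs) \<Longrightarrow> length c = length xs"
  using encm_col by blast

lemma rep_encm:
  assumes "length xs = k" "ml m xs"
  shows "replicate a (replicate k None) @ encm m xs = encm (a + m) xs"
proof (rule word_ext[of _ _ k])
  have mla: "ml (a + m) xs" using assms(2) by (auto simp: ml_def)
  show "\<forall>j<k. track j (replicate a (replicate k None) @ encm m xs) = track j (encm (a + m) xs)"
    using assms mla by (auto simp: track_append track_replicate encm_track padl_add ml_def nth_mem)
qed (use assms encm_col in auto)

lemma unrep_encm:
  assumes "replicate a (replicate k None) @ v = encm M xs" "length xs = k" "ml M xs"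
  shows "ml (length v) xs \<and> v = encm (length v) xs"
proof -
  have lenM: "M = a + length v" using arg_cong[OF assms(1), of length] by simp
  have tr: "replicate a None @ track j v = padl M (rep (xs ! j))" if "j < k" for j
    using arg_cong[OF assms(1), of "track j"] that assms(2,3)
    by (simp add: track_append track_replicate encm_track)
  have mlv: "ml (length v) xs"
    unfolding ml_def
  proof
    fix x assume "x \<in> set xs"
    then obtain j where j: "j < k" "x = xs ! j" using assms(2) by (metis in_set_conv_nth)
    have "length (rep x) = length (filter (\<lambda>x. x \<noteq> None) (padl M (rep (xs ! j))))"
      using padl_somes j(2) by metis
    also have "\<dots> = length (filter (\<lambda>x. x \<noteq> None) (replicate a None @ track j v))"
      using tr[OF j(1)] by simp
    also have "\<dots> = length (filter (\<lambda>x. x \<noteq> None) (track j v))" by simp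
    also have "\<dots> \<le> length (track j v)" by (rule length_filter_le)
    finally show "length (rep x) \<le> length v" by (simp add: track_def)
  qed
  have "v = encm (length v) xs"
  proof (rule word_ext[of _ _ k])
    show "\<forall>c\<in>set v. length c = k" using assms(1,2) encm_col by (metis Un_iff set_append)
    show "\<forall>j<k. track j v = track j (encm (length v) xs)"
    proof (intro allI impI)
      fix j assume j: "j < k"
      have "length (rep (xs ! j)) \<le> length v" using mlv j assms(2) by (simp add: ml_def nth_mem)
      then have "replicate a None @ track j v = replicate a None @ padl (length v) (rep (xs ! j))"
        using tr[OF j] lenM padl_add[of "rep (xs ! j)" "length v" a] by simp
      then show "track j v = track j (encm (length v) xs)" using encm_track j assms(2) mlv by simp
    qed
  qed (use assms encm_col in auto)
  with mlv show ?thesis by simp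
qed

lemma rrel_ex:
  assumes "rrel (Suc k) P"
  shows "rrel k (\<lambda>xs. \<exists>x. P (xs @ [x]))"
proof -
  let ?z = "replicate k (None :: 'd option)"
  have "lang k (\<lambda>xs. \<exists>x. P (xs @ [x])) = {v. \<exists>a. replicate a ?z @ v \<in> map butlast ` lang (Suc k) P}"
  proof (intro set_eqI iffI)
    fix v assume "v \<in> lang k (\<lambda>xs. \<exists>x. P (xs @ [x]))"
    then obtain m xs x where v: "v = encm m xs" "length xs = k" "ml m xs" "P (xs @ [x])"
      by (auto elim!: lang_memE)
    define M where "M = max m (length (rep x))"
    have mlM: "ml M (xs @ [x])" using v(3) by (auto simp: ml_def M_def)
    have "encm M (xs @ [x]) \<in> lang (Suc k) P" using mlM v by (simp add: lang_iff)
    moreover have "map butlast (encm M (xs @ [x])) = replicate (M - m) ?z @ v"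
      using rep_encm[OF v(2,3), of "M - m"] v(1) by (simp add: map_butlast_encm M_def)
    ultimately show "v \<in> {v. \<exists>a. replicate a ?z @ v \<in> map butlast ` lang (Suc k) P}"
      by (metis (mono_tags, lifting) image_eqI mem_Collect_eq)
  next
    fix v assume "v \<in> {v. \<exists>a. replicate a ?z @ v \<in> map butlast ` lang (Suc k) P}"
    then obtain a w where a: "replicate a ?z @ v = map butlast w" "w \<in> lang (Suc k) P" by blast
    then obtain M ys where w: "w = encm M ys" "length ys = Suc k" "ml M ys" "P ys"
      by (auto elim!: lang_memE)
    obtain xs x where ys: "ys = xs @ [x]" using w(2) by (metis length_Suc_conv_rev)
    have lx: "length xs = k" using w(2) ys by simp
    have mlx: "ml M xs" using w(3) ys by (simp add: ml_def)
    have "replicate a ?z @ v = encm M xs" using a(1) w(1) ys by (simp add: map_butlast_encm)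
    from unrep_encm[OF this lx mlx] have "ml (length v) xs" "v = encm (length v) xs" by auto
    then show "v \<in> lang k (\<lambda>xs. \<exists>x. P (xs @ [x]))" using lx w(4) ys by (metis lang_iff)
  qed
  then show ?thesis using assms unfolding rrel_def by (simp add: reg_quot reg_image)
qed

lemma map_sel_encm:
  assumes "\<forall>i\<in>set \<sigma>. i < length xs"
  shows "map (\<lambda>c. map (nth c) \<sigma>) (encm m xs) = encm m (map (nth xs) \<sigma>)"
  using assms by (simp add: encm_def)

lemma rrel_sel:
  assumes "rrel (length \<sigma>) P" "\<forall>i\<in>set \<sigma>. i < k"
  shows "rrel k (\<lambda>xs. P (map (nth xs) \<sigma>))"
proof -
  have "lang k (\<lambda>xs. P (map (nth xs) \<sigma>)) = lang k (\<lambda>_. True) \<inter> {w. map (\<lambda>c. map (nth c) \<sigma>) w \<in> lang (length \<sigma>) P}"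
  proof (rule lang_ext)
    fix m xs assume "length xs = k" "ml m xs"
    moreover have "ml m (map (nth xs) \<sigma>)" using \<open>ml m xs\<close> assms(2) \<open>length xs = k\<close>
      by (auto simp: ml_def nth_mem)
    ultimately show "encm m xs \<in> lang k (\<lambda>_. True) \<inter> {w. map (\<lambda>c. map (nth c) \<sigma>) w \<in> lang (length \<sigma>) P}
       \<longleftrightarrow> P (map (nth xs) \<sigma>)"
      using assms(2) by (simp add: map_sel_encm lang_iff)
  qed auto
  then show ?thesis unfolding rrel_def
    using reg_inter[OF rrel_true[unfolded rrel_def] reg_vimage[OF assms(1)[unfolded rrel_def]]] by simp
qed

lemma rrel_all:
  assumes "rrel (Suc k) P"
  shows "rrel k (\<lambda>xs. \<forall>x. P (xs @ [x]))"
  using rrel_not[OF rrel_ex[OF rrel_not[OF assms]]] by simp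

lemma rrel_exfin:
  assumes "finite A" "\<forall>a\<in>A. rrel k (P a)"
  shows "rrel k (\<lambda>xs. \<exists>a\<in>A. P a xs)"
  using assms
proof (induction A rule: finite_induct)
  case empty
  then show ?case using rrel_false by simp
next
  case (insert a A)
  then have "rrel k (\<lambda>xs. P a xs \<or> (\<exists>a\<in>A. P a xs))" by (intro rrel_or) auto
  then show ?case by simp
qed

lemma rrel_allfin:
  assumes "finite A" "\<forall>a\<in>A. rrel k (P a)"
  shows "rrel k (\<lambda>xs. \<forall>a\<in>A. P a xs)"
proof -
  have "rrel k (\<lambda>xs. \<not> (\<exists>a\<in>A. \<not> P a xs))"
    using assms by (intro rrel_not rrel_exfin) (auto intro: rrel_not)
  then show ?thesis by simp
qed

lemma rrel_imp: "rrel k P \<Longrightarrow> rrel k Q \<Longrightarrow> rrel k (\<lambda>xs. P xs \<longrightarrow> Q xs)"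
  using rrel_or[OF rrel_not] by simp

lemma rrel_exs:
  assumes "rrel (k + j) P"
  shows "rrel k (\<lambda>xs. \<exists>ys. length ys = j \<and> P (xs @ ys))"
  using assms
proof (induction j arbitrary: P)
  case 0
  then show ?case by simp
next
  case (Suc j)
  have "rrel (k + j) (\<lambda>zs. \<exists>x. P (zs @ [x]))" using rrel_ex Suc.prems by simp
  from Suc.IH[OF this] have "rrel k (\<lambda>xs. \<exists>ys. length ys = j \<and> (\<exists>x. P ((xs @ ys) @ [x])))" .
  then show ?case
  proof (rule rrel_cong)
    fix xs :: "nat list"
    show "(\<exists>ys. length ys = j \<and> (\<exists>x. P ((xs @ ys) @ [x]))) = (\<exists>ys. length ys = Suc j \<and> P (xs @ ys))"
      by (metis append.assoc length_Suc_conv_rev length_append_singleton)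
  qed
qed

lemma rrel_alls:
  assumes "rrel (k + j) P"
  shows "rrel k (\<lambda>xs. \<forall>ys. length ys = j \<longrightarrow> P (xs @ ys))"
  using rrel_not[OF rrel_exs[OF rrel_not[OF assms]]] by simp

end


lemma padl0_some: "length u = M \<Longrightarrow> 0 < M \<Longrightarrow> padl M u ! 0 \<noteq> None"
  by (cases u) (auto simp: padl_def)

lemma padl0_none: "length u < M \<Longrightarrow> padl M u ! 0 = None"
  by (simp add: padl_def nth_append)

lemma zip_rep: "zip (replicate a x @ A) (replicate a y @ B) = replicate a (x, y) @ zip A B"
  by (simp add: zip_append)

lemma triple_word_eq:
  "triple_word u v w = (let M = max (length u) (max (length v) (length w)) in
     zip (padl M u) (zip (padl M v) (padl M w)))"
  by (simp add: triple_word_def)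

context nsys begin

definition f3 :: "'d option list \<Rightarrow> 'd option \<times> 'd option \<times> 'd option" where
  "f3 c = (c ! 0, c ! 1, c ! 2)"

lemma map_f3_encm:
  assumes "ml m [x, y, z]"
  shows "map f3 (encm m [x, y, z]) = zip (padl m (rep x)) (zip (padl m (rep y)) (padl m (rep z)))"
  using assms by (intro nth_equalityI) (auto simp: encm_nth f3_def ml_def)

lemma T_hd:
  assumes "v \<in> {triple_word (rep x) (rep y) (rep z) | x y z. z = x + y}"
  shows "v = [] \<or> hd v \<noteq> (None, None, None)"
proof -
  obtain x y z where v: "v = triple_word (rep x) (rep y) (rep z)" using assms by blast
  define M where "M = max (length (rep x)) (max (length (rep y)) (length (rep z)))"
  have v2: "v = zip (padl M (rep x)) (zip (padl M (rep y)) (padl M (rep z)))"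
    unfolding v triple_word_eq M_def Let_def by simp
  show ?thesis
  proof (cases "M = 0")
    case True then show ?thesis using v2 by (simp add: M_def padl_def)
  next
    case False
    have lv: "length v = M" using v2 by (simp add: M_def)
    have L: "length (rep x) \<le> M" "length (rep y) \<le> M" "length (rep z) \<le> M" unfolding M_def by auto
    have "v \<noteq> []" using lv False by auto
    then have "hd v = v ! 0" by (simp add: hd_conv_nth)
    also have "\<dots> = (padl M (rep x) ! 0, padl M (rep y) ! 0, padl M (rep z) ! 0)"
      using v2 L False by simp
    finally have hd: "hd v = (padl M (rep x) ! 0, padl M (rep y) ! 0, padl M (rep z) ! 0)" .
    have "M = length (rep x) \<or> M = length (rep y) \<or> M = length (rep z)" unfolding M_def by linarith
    then have "padl M (rep x) ! 0 \<noteq> None \<or> padl M (rep y) ! 0 \<noteq> None \<or> padl M (rep z) ! 0 \<noteq> None"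
      using padl0_some False by auto
    then have "hd v \<noteq> (None, None, None)" using hd by auto
    then show ?thesis by simp
  qed
qed

lemma rrel_add: "rrel 3 (\<lambda>ys. ys ! 2 = ys ! 0 + ys ! 1)"
proof -
  define T where "T = {triple_word (rep x) (rep y) (rep z) | x y z. z = x + y}"
  define PT where "PT = {replicate a (None, None, None) @ v | a v. v \<in> T}"
  have PTr: "regular_lang PT" unfolding PT_def
    by (rule reg_padcl) (use addr T_hd in \<open>auto simp: T_def\<close>)
  have "lang 3 (\<lambda>ys. ys ! 2 = ys ! 0 + ys ! 1) = lang 3 (\<lambda>_. True) \<inter> {w. map f3 w \<in> PT}"
  proof (rule lang_ext)
    fix m and xs :: "nat list" assume l: "length xs = 3" and mlx: "ml m xs"
    obtain x y z where xs: "xs = [x, y, z]" using l by (auto simp: numeral_3_eq_3 length_Suc_conv)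
    have lx: "length (rep x) \<le> m" and ly: "length (rep y) \<le> m" and lz: "length (rep z) \<le> m"
      using mlx xs by (auto simp: ml_def)
    have e: "map f3 (encm m xs) = zip (padl m (rep x)) (zip (padl m (rep y)) (padl m (rep z)))"
      using map_f3_encm mlx xs by simp
    have "map f3 (encm m xs) \<in> PT \<longleftrightarrow> z = x + y"
    proof
      assume "z = x + y"
      define M where "M = max (length (rep x)) (max (length (rep y)) (length (rep z)))"
      have Mm: "M \<le> m" using lx ly lz by (simp add: M_def)
      have pm: "padl m u = replicate (m - M) None @ padl M u" if "length u \<le> M" for u
        using padl_add[OF that, of "m - M"] Mm by simp
      have "map f3 (encm m xs) = replicate (m - M) (None, None, None) @ triple_word (rep x) (rep y) (rep z)"
        unfolding e triple_word_eq Let_def M_def[symmetric]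
        by (subst (1 2 3) pm) (auto simp: M_def zip_rep)
      then show "map f3 (encm m xs) \<in> PT" unfolding PT_def T_def using \<open>z = x + y\<close> by blast
    next
      assume "map f3 (encm m xs) \<in> PT"
      then obtain a x' y' z' where h: "map f3 (encm m xs) = replicate a (None, None, None) @ triple_word (rep x') (rep y') (rep z')"
        and z': "z' = x' + y'" unfolding PT_def T_def by blast
      define M where "M = max (length (rep x')) (max (length (rep y')) (length (rep z')))"
      have L0: "length (rep x') \<le> M" "length (rep y') \<le> M" "length (rep z') \<le> M"
        unfolding M_def by auto
      have r: "replicate a (None, None, None) @ zip (padl M (rep x')) (zip (padl M (rep y')) (padl M (rep z')))
          = zip (padl (a + M) (rep x')) (zip (padl (a + M) (rep y')) (padl (a + M) (rep z')))"
        using L0 by (simp add: padl_add[symmetric] zip_rep)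
      have h2: "zip (padl m (rep x)) (zip (padl m (rep y)) (padl m (rep z))) =
          zip (padl (a + M) (rep x')) (zip (padl (a + M) (rep y')) (padl (a + M) (rep z')))"
        using h unfolding e triple_word_eq Let_def M_def[symmetric] r .
      have am: "a + M = m" using arg_cong[OF h2, of length] lx ly lz by (simp add: M_def)
      have L: "length (rep x') \<le> a + M" "length (rep y') \<le> a + M" "length (rep z') \<le> a + M"
        by (auto simp: M_def)
      have "padl m (rep x) = padl m (rep x')"
        using arg_cong[OF h2, of "map fst"] lx ly lz L am by simp
      then have "x = x'" using inj padl_inj by (metis injD)
      moreover have "padl m (rep y) = padl m (rep y')"
        using arg_cong[OF h2, of "map (fst \<circ> snd)"] lx ly lz L am by (simp flip: map_map)
      then have "y = y'" using inj padl_inj by (metis injD)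
      moreover have "padl m (rep z) = padl m (rep z')"
        using arg_cong[OF h2, of "map (snd \<circ> snd)"] lx ly lz L am by (simp flip: map_map)
      then have "z = z'" using inj padl_inj by (metis injD)
      ultimately show "z = x + y" using z' by simp
    qed
    then show "encm m xs \<in> lang 3 (\<lambda>_. True) \<inter> {w. map f3 w \<in> PT} \<longleftrightarrow> xs ! 2 = xs ! 0 + xs ! 1"
      using l mlx xs by (simp add: lang_iff)
  qed auto
  then show ?thesis unfolding rrel_def
    using reg_inter[OF rrel_true[unfolded rrel_def] reg_vimage[OF PTr]] by simp
qed

lemma rrel_auto:
  assumes "automatic_wrt rep s"
  shows "rrel 1 (\<lambda>ys. s (ys ! 0) = b)"
proof -
  obtain Q q0 and \<delta> :: "nat \<Rightarrow> 'd \<Rightarrow> nat" and \<tau> where A: "finite Q" "q0 \<in> Q" "\<forall>q\<in>Q. \<forall>a. \<delta> q a \<in> Q"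
    "\<forall>n. s n = \<tau> (foldl \<delta> q0 (rep n))" using assms unfolding automatic_wrt_def by blast
  define \<delta>2 where "\<delta>2 q x = (case x of None \<Rightarrow> q | Some d \<Rightarrow> \<delta> q d)" for q x
  define \<delta>1 where "\<delta>1 q c = \<delta>2 q (c ! 0)" for q and c :: "'d option list"
  have f1: "foldl \<delta>1 q w = foldl \<delta>2 q (track 0 w)" for q w
    by (induction w arbitrary: q) (auto simp: \<delta>1_def track_def)
  have f2: "foldl \<delta>2 q (replicate n None) = q" for q n
    by (induction n) (auto simp: \<delta>2_def)
  have f3': "foldl \<delta>2 q (map Some u) = foldl \<delta> q u" for q u
    by (induction u arbitrary: q) (auto simp: \<delta>2_def)
  have f4: "foldl \<delta>2 q (padl m u) = foldl \<delta> q u" for q m u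
    by (simp add: padl_def f2 f3')
  have "lang 1 (\<lambda>ys. s (ys ! 0) = b) = lang 1 (\<lambda>_. True) \<inter> {w. foldl \<delta>1 q0 w \<in> {q. \<tau> q = b}}"
  proof (rule lang_ext)
    fix m and xs :: "nat list" assume l: "length xs = 1" and mlx: "ml m xs"
    have "foldl \<delta>1 q0 (encm m xs) = foldl \<delta> q0 (rep (xs ! 0))"
      using l mlx by (simp add: f1 encm_track f4)
    then show "encm m xs \<in> lang 1 (\<lambda>_. True) \<inter> {w. foldl \<delta>1 q0 w \<in> {q. \<tau> q = b}} \<longleftrightarrow> s (xs ! 0) = b"
      using l mlx A(4) by (simp add: lang_iff)
  qed auto
  moreover have "regular_lang {w. foldl \<delta>1 q0 w \<in> {q. \<tau> q = b}}"
    by (rule regI[of Q]) (use A in \<open>auto simp: \<delta>1_def \<delta>2_def split: option.splits\<close>)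
  ultimately show ?thesis unfolding rrel_def using reg_inter rrel_true[unfolded rrel_def] by metis
qed

lemma NL_reg: "regular_lang {w :: 'a list. w = [] \<or> hd w \<noteq> z}"
proof -
  define \<delta> where "\<delta> q c = (if q = (0::nat) then (if c = z then 2 else 1) else q)" for q c
  have st: "q \<noteq> 0 \<Longrightarrow> foldl \<delta> q w = q" for q w
    by (induction w) (auto simp: \<delta>_def)
  have e: "foldl \<delta> 0 w \<in> {0, 1} \<longleftrightarrow> (w = [] \<or> hd w \<noteq> z)" for w
    by (cases w) (auto simp: \<delta>_def st)
  have "regular_lang {w. foldl \<delta> 0 w \<in> {0, 1}}" by (rule regI[of "{0,1,2}"]) (auto simp: \<delta>_def)
  then show ?thesis unfolding e .
qed

lemma sync_of_rrel:
  assumes "rrel 2 (\<lambda>ys. ys ! 1 = f (ys ! 0))"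
  shows "synchronized rep f"
proof -
  define g :: "'d option \<times> 'd option \<Rightarrow> 'd option list" where "g p = [fst p, snd p]" for p
  define NL where "NL = {w :: 'd option list list. w = [] \<or> hd w \<noteq> [None, None]}"
  have "{pair_word (rep n) (rep (f n)) | n. True} = {p. map g p \<in> lang 2 (\<lambda>ys. ys ! 1 = f (ys ! 0)) \<inter> NL}"
  proof (intro set_eqI iffI)
    fix p assume "p \<in> {pair_word (rep n) (rep (f n)) | n. True}"
    then obtain n where p: "p = pair_word (rep n) (rep (f n))" by blast
    define M where "M = max (length (rep n)) (length (rep (f n)))"
    have p2: "p = zip (padl M (rep n)) (padl M (rep (f n)))" unfolding p pair_word_def M_def Let_def by simp
    have mlM: "ml M [n, f n]" by (simp add: ml_def M_def)
    have e: "map g p = encm M [n, f n]"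
      using mlM p2 by (intro nth_equalityI) (auto simp: encm_nth g_def ml_def M_def)
    have "map g p \<in> NL"
    proof (cases "M = 0")
      case True then show ?thesis using e by (simp add: NL_def encm_def)
    next
      case False
      have "hd (map g p) = [padl M (rep n) ! 0, padl M (rep (f n)) ! 0]"
        using e False by (simp add: hd_conv_nth encm_nth encm_def)
      moreover have "M = length (rep n) \<or> M = length (rep (f n))" by (simp add: M_def max_def)
      ultimately show ?thesis unfolding NL_def using padl0_some False by auto
    qed
    moreover have "map g p \<in> lang 2 (\<lambda>ys. ys ! 1 = f (ys ! 0))" using e mlM by (simp add: lang_iff)
    ultimately show "p \<in> {p. map g p \<in> lang 2 (\<lambda>ys. ys ! 1 = f (ys ! 0)) \<inter> NL}" by simp
  next
    fix p assume "p \<in> {p. map g p \<in> lang 2 (\<lambda>ys. ys ! 1 = f (ys ! 0)) \<inter> NL}"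
    then have a: "map g p \<in> lang 2 (\<lambda>ys. ys ! 1 = f (ys ! 0))" and nl: "map g p \<in> NL" by auto
    from a obtain m xs where w: "map g p = encm m xs" "length xs = 2" "ml m xs" "xs ! 1 = f (xs ! 0)"
      by (auto elim!: lang_memE)
    obtain x y where xs: "xs = [x, y]" using w(2) by (auto simp: numeral_2_eq_2 length_Suc_conv)
    have lx: "length (rep x) \<le> m" and ly: "length (rep y) \<le> m" using w(3) xs by (auto simp: ml_def)
    have g0: "track 0 (map g p) = map fst p" and g1: "track 1 (map g p) = map snd p"
      by (simp_all add: track_def g_def comp_def)
    have t0: "map fst p = padl m (rep x)"
      using encm_track[of 0 xs m] w xs g0 by simp
    have t1: "map snd p = padl m (rep y)"
      using encm_track[of 1 xs m] w xs g1 by simp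
    have mM: "m = max (length (rep x)) (length (rep y))"
    proof (rule ccontr)
      assume "m \<noteq> max (length (rep x)) (length (rep y))"
      then have lt: "length (rep x) < m" "length (rep y) < m" using lx ly by auto
      have "length (map g p) = m" using w(1) by simp
      then have "map g p \<noteq> []" using lt by auto
      moreover have "hd (map g p) = [padl m (rep x) ! 0, padl m (rep y) ! 0]"
        using w(1) xs lt by (simp add: hd_conv_nth encm_nth encm_def)
      ultimately show False using nl padl0_none[OF lt(1)] padl0_none[OF lt(2)] unfolding NL_def by auto
    qed
    have "p = zip (map fst p) (map snd p)" by (simp add: zip_map_fst_snd)
    also have "\<dots> = pair_word (rep x) (rep y)" unfolding t0 t1 pair_word_def mM Let_def by simp
    finally show "p \<in> {pair_word (rep n) (rep (f n)) | n. True}" using w(4) xs by auto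
  qed
  moreover have "regular_lang {p. map g p \<in> lang 2 (\<lambda>ys. ys ! 1 = f (ys ! 0)) \<inter> NL}"
    using assms unfolding rrel_def NL_def by (intro reg_vimage reg_inter NL_reg)
  ultimately show ?thesis unfolding synchronized_def by simp
qed

end


definition ins :: "nat \<Rightarrow> 'a \<Rightarrow> 'a list \<Rightarrow> 'a list" where
  "ins h x vs = take h vs @ x # drop h vs"

lemma ins_nth: "h \<le> length vs \<Longrightarrow> ins h x vs ! i = (if i < h then vs ! i else if i = h then x else vs ! (i - 1))"
  by (auto simp: ins_def nth_append min_def nth_Cons' )

lemma ins_drop: "h \<le> length vs \<Longrightarrow> drop (Suc h) (ins h x vs) = drop h vs"
  by (simp add: ins_def min_def)

lemma ins_len: "length (ins h x vs) = Suc (length vs)"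
  by (simp add: ins_def)

lemma map_nth_upt_drop: "map (nth ws) [h..<length ws] = drop h ws"
  by (rule nth_equalityI) auto

lemma set_drop_eq: assumes "length vs = h + j" shows "set (drop h vs) = (\<lambda>r. vs ! (h + r)) ` {..<j}"
proof (rule set_eqI)
  fix x
  have "x \<in> set (drop h vs) \<longleftrightarrow> (\<exists>r<length (drop h vs). drop h vs ! r = x)" by (rule in_set_conv_nth)
  also have "\<dots> \<longleftrightarrow> (\<exists>r<j. vs ! (h + r) = x)" using assms by simp
  finally show "x \<in> set (drop h vs) \<longleftrightarrow> x \<in> (\<lambda>r. vs ! (h + r)) ` {..<j}" by auto
qed

lemma ex_set_drop: "length vs = h + j \<Longrightarrow> (\<exists>k\<in>set (drop h vs). P k) \<longleftrightarrow> (\<exists>r\<in>{..<j}. P (vs ! (h + r)))"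
  by (simp add: set_drop_eq)

lemma all_set_drop: "length vs = h + j \<Longrightarrow> (\<forall>k\<in>set (drop h vs). P k) \<longleftrightarrow> (\<forall>r\<in>{..<j}. P (vs ! (h + r)))"
  by (simp add: set_drop_eq)

context nsys begin

lemma rrel_ex2: "rrel n P \<Longrightarrow> n = Suc k \<Longrightarrow> rrel k (\<lambda>xs. \<exists>x. P (xs @ [x]))"
  using rrel_ex by blast

lemma rrel_sel2: "rrel n P \<Longrightarrow> length \<sigma> = n \<Longrightarrow> \<forall>i\<in>set \<sigma>. i < k \<Longrightarrow> rrel k (\<lambda>xs. P (map (nth xs) \<sigma>))"
  using rrel_sel by blast

lemma atom1: "rrel 1 P \<Longrightarrow> a < k \<Longrightarrow> rrel k (\<lambda>zs. P [zs ! a])"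
  using rrel_sel2[of 1 P "[a]" k] by simp

lemma atom2: "rrel 2 P \<Longrightarrow> a < k \<Longrightarrow> b < k \<Longrightarrow> rrel k (\<lambda>zs. P [zs ! a, zs ! b])"
  using rrel_sel2[of 2 P "[a, b]" k] by simp

lemma atom3: "rrel 3 P \<Longrightarrow> a < k \<Longrightarrow> b < k \<Longrightarrow> c < k \<Longrightarrow> rrel k (\<lambda>zs. P [zs ! a, zs ! b, zs ! c])"
  using rrel_sel2[of 3 P "[a, b, c]" k] by simp

lemma atom4: "rrel 4 P \<Longrightarrow> a < k \<Longrightarrow> b < k \<Longrightarrow> c < k \<Longrightarrow> d < k \<Longrightarrow> rrel k (\<lambda>zs. P [zs ! a, zs ! b, zs ! c, zs ! d])"
  using rrel_sel2[of 4 P "[a, b, c, d]" k] by simp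

lemma rrel_ex_at:
  assumes "rrel (Suc (h + j)) P"
  shows "rrel (h + j) (\<lambda>vs. \<exists>x. P (ins h x vs))"
proof -
  define \<sigma> where "\<sigma> = [0..<h] @ [h + j] @ [h..<h + j]"
  have l\<sigma>: "length \<sigma> = Suc (h + j)" by (simp add: \<sigma>_def)
  have b\<sigma>: "\<forall>i\<in>set \<sigma>. i < Suc (h + j)" by (auto simp: \<sigma>_def)
  have "rrel (Suc (h + j)) (\<lambda>ws. P (map (nth ws) \<sigma>))"
    by (rule rrel_sel2[OF assms l\<sigma> b\<sigma>])
  from rrel_ex[OF this] show ?thesis
  proof (rule rrel_cong)
    fix vs :: "nat list" assume l: "length vs = h + j"
    have "map (nth (vs @ [x])) \<sigma> = ins h x vs" for x
      using l by (intro nth_equalityI) (auto simp: \<sigma>_def ins_len ins_nth nth_append)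
    then show "(\<exists>x. P (map (nth (vs @ [x])) \<sigma>)) = (\<exists>x. P (ins h x vs))" by simp
  qed
qed

lemma rrel_all_at:
  assumes "rrel (Suc (h + j)) P"
  shows "rrel (h + j) (\<lambda>vs. \<forall>x. P (ins h x vs))"
  using rrel_not[OF rrel_ex_at[OF rrel_not[OF assms]]] by simp

lemma rrel_exset:
  assumes "\<forall>r<j. rrel (h + j) (\<lambda>vs. Q (vs ! (h + r)) vs)"
  shows "rrel (h + j) (\<lambda>vs. \<exists>k\<in>set (drop h vs). Q k vs)"
proof -
  have "rrel (h + j) (\<lambda>vs. \<exists>r\<in>{..<j}. Q (vs ! (h + r)) vs)" using assms by (intro rrel_exfin) auto
  then show ?thesis by (rule rrel_cong) (simp add: ex_set_drop)
qed

lemma rrel_allset: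
  assumes "\<forall>r<j. rrel (h + j) (\<lambda>vs. Q (vs ! (h + r)) vs)"
  shows "rrel (h + j) (\<lambda>vs. \<forall>k\<in>set (drop h vs). Q k vs)"
proof -
  have "rrel (h + j) (\<lambda>vs. \<forall>r\<in>{..<j}. Q (vs ! (h + r)) vs)" using assms by (intro rrel_allfin) auto
  then show ?thesis by (rule rrel_cong) (simp add: all_set_drop)
qed

lemma rrel_le: "rrel 2 (\<lambda>ys. ys ! 0 \<le> ys ! 1)"
proof -
  have h3: "rrel 3 (\<lambda>zs. zs ! 1 = zs ! 0 + zs ! 2)" using atom3[OF rrel_add, of 0 3 2 1] by simp
  have "rrel 2 (\<lambda>xs. \<exists>x. (xs @ [x]) ! 1 = (xs @ [x]) ! 0 + (xs @ [x]) ! 2)"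
    by (rule rrel_ex2[OF h3]) simp
  then show ?thesis
    by (rule rrel_cong) (auto simp: nth_append le_iff_add)
qed

lemma rrel_lt: "rrel 2 (\<lambda>ys. ys ! 0 < ys ! 1)"
  using rrel_not[OF atom2[OF rrel_le, of 1 2 0]] by (simp add: not_le)

lemma rrel_eq: "rrel 2 (\<lambda>ys. ys ! 0 = ys ! 1)"
  using rrel_and[OF rrel_le atom2[OF rrel_le, of 1 2 0]] by (simp add: eq_iff)

lemma rrel_neq: "rrel 2 (\<lambda>ys. ys ! 0 \<noteq> ys ! 1)"
  using rrel_not[OF rrel_eq] by simp

lemma rrel_zero: "rrel 1 (\<lambda>ys. ys ! 0 = 0)"
  using atom3[OF rrel_add, of 0 1 0 0] by simp

lemma rrel_pos: "rrel 1 (\<lambda>ys. 0 < ys ! 0)"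
  using rrel_not[OF rrel_zero] by simp

lemma rrel_le_sum: "rrel 3 (\<lambda>ys. ys ! 0 \<le> ys ! 1 + ys ! 2)"
proof -
  define P4 where "P4 = (\<lambda>zs::nat list. zs ! 3 = zs ! 1 + zs ! 2 \<and> zs ! 0 \<le> zs ! 3)"
  have h4: "rrel 4 P4" unfolding P4_def
    using rrel_and[OF atom3[OF rrel_add, of 1 4 2 3] atom2[OF rrel_le, of 0 4 3]] by simp
  have "rrel 3 (\<lambda>xs. \<exists>x. P4 (xs @ [x]))" by (rule rrel_ex2[OF h4]) simp
  then show ?thesis
    by (rule rrel_cong) (auto simp: nth_append P4_def)
qed

lemma rrel_lt_sum: "rrel 3 (\<lambda>ys. ys ! 0 < ys ! 1 + ys ! 2)"
proof -
  define P4 where "P4 = (\<lambda>zs::nat list. zs ! 3 = zs ! 1 + zs ! 2 \<and> zs ! 0 < zs ! 3)"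
  have h4: "rrel 4 P4" unfolding P4_def
    using rrel_and[OF atom3[OF rrel_add, of 1 4 2 3] atom2[OF rrel_lt, of 0 4 3]] by simp
  have "rrel 3 (\<lambda>xs. \<exists>x. P4 (xs @ [x]))" by (rule rrel_ex2[OF h4]) simp
  then show ?thesis
    by (rule rrel_cong) (auto simp: nth_append P4_def)
qed

lemma rrel_sum_le: "rrel 3 (\<lambda>ys. ys ! 0 + ys ! 1 \<le> ys ! 2)"
proof -
  define P4 where "P4 = (\<lambda>zs::nat list. zs ! 3 = zs ! 0 + zs ! 1 \<and> zs ! 3 \<le> zs ! 2)"
  have h4: "rrel 4 P4" unfolding P4_def
    using rrel_and[OF atom3[OF rrel_add, of 0 4 1 3] atom2[OF rrel_le, of 3 4 2]] by simp
  have "rrel 3 (\<lambda>xs. \<exists>x. P4 (xs @ [x]))" by (rule rrel_ex2[OF h4]) simp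
  then show ?thesis
    by (rule rrel_cong) (auto simp: nth_append P4_def)
qed

lemma rrel_sum_eq: "rrel 3 (\<lambda>ys. ys ! 0 + ys ! 1 = ys ! 2)"
  using atom3[OF rrel_add, of 0 3 1 2] by (simp add: eq_commute)

lemma rrel_distinct: "rrel (h + j) (\<lambda>vs. distinct (drop h vs))"
proof -
  have "rrel (h + j) (\<lambda>vs. \<forall>a\<in>{..<j}. \<forall>b\<in>{..<j}. a \<noteq> b \<longrightarrow> vs ! (h + a) \<noteq> vs ! (h + b))"
  proof (intro rrel_allfin ballI)
    fix a b assume "a \<in> {..<j}" "b \<in> {..<j}"
    show "rrel (h + j) (\<lambda>vs. a \<noteq> b \<longrightarrow> vs ! (h + a) \<noteq> vs ! (h + b))"
    proof (cases "a = b")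
      case True then show ?thesis using rrel_true by simp
    next
      case False then show ?thesis using atom2[OF rrel_neq, of "h + a" "h + j" "h + b"] \<open>a \<in> _\<close> \<open>b \<in> _\<close> by simp
    qed
  qed auto
  then show ?thesis by (rule rrel_cong) (auto simp: distinct_conv_nth)
qed

end


definition fac :: "(nat \<Rightarrow> 'b) \<Rightarrow> nat \<Rightarrow> nat \<Rightarrow> nat \<Rightarrow> bool" where
  "fac s p i l \<longleftrightarrow> (\<forall>t<l. s (p + t) = s (i + t))"

definition attr :: "(nat \<Rightarrow> 'b) \<Rightarrow> nat \<Rightarrow> nat list \<Rightarrow> bool" where
  "attr s n ks \<longleftrightarrow> (\<forall>k\<in>set ks. k < n) \<and>
     (\<forall>i l. 0 < l \<and> i + l \<le> n \<longrightarrow> (\<exists>p. (\<exists>k\<in>set ks. p \<le> k \<and> k < p + l) \<and> p + l \<le> n \<and> fac s p i l))"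

definition atte :: "(nat \<Rightarrow> 'b) \<Rightarrow> nat \<Rightarrow> nat \<Rightarrow> bool" where
  "atte s j n \<longleftrightarrow> (\<exists>ks. length ks = j \<and> distinct ks \<and> attr s n ks)"

definition gam :: "(nat \<Rightarrow> 'b) \<Rightarrow> nat \<Rightarrow> nat \<Rightarrow> bool" where
  "gam s j n \<longleftrightarrow> atte s j n \<and> (\<forall>j'<j. \<not> atte s j' n)"

lemma ins_drop': "h < n \<Longrightarrow> h \<le> length vs \<Longrightarrow> drop n (ins h x vs) = drop (n - 1) vs"
  by (auto simp: ins_def min_def drop_Cons' )

lemma span_char:
  assumes "ks \<noteq> []"
  shows "P (span (set ks)) \<longleftrightarrow>
    (\<exists>a<length ks. \<exists>b<length ks. (\<forall>r<length ks. ks ! r \<le> ks ! a \<and> ks ! b \<le> ks ! r) \<and> P (ks ! a - ks ! b))"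
proof
  assume h: "P (span (set ks))"
  have "Max (set ks) \<in> set ks" "Min (set ks) \<in> set ks" using assms by auto
  then obtain a b where ab: "a < length ks" "ks ! a = Max (set ks)" "b < length ks" "ks ! b = Min (set ks)"
    by (metis in_set_conv_nth)
  have "\<forall>r<length ks. ks ! r \<le> ks ! a \<and> ks ! b \<le> ks ! r" using ab by (simp add: nth_mem)
  moreover have "span (set ks) = ks ! a - ks ! b" using ab assms by (simp add: span_def)
  ultimately show "\<exists>a<length ks. \<exists>b<length ks. (\<forall>r<length ks. ks ! r \<le> ks ! a \<and> ks ! b \<le> ks ! r) \<and> P (ks ! a - ks ! b)"
    using h ab by metis
next
  assume "\<exists>a<length ks. \<exists>b<length ks. (\<forall>r<length ks. ks ! r \<le> ks ! a \<and> ks ! b \<le> ks ! r) \<and> P (ks ! a - ks ! b)"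
  then obtain a b where ab: "a < length ks" "b < length ks" "\<forall>r<length ks. ks ! r \<le> ks ! a \<and> ks ! b \<le> ks ! r"
    "P (ks ! a - ks ! b)" by blast
  have "Max (set ks) = ks ! a" using ab by (intro Max_eqI) (auto simp: in_set_conv_nth nth_mem)
  moreover have "Min (set ks) = ks ! b" using ab by (intro Min_eqI) (auto simp: in_set_conv_nth nth_mem)
  ultimately show "P (span (set ks))" using ab assms by (simp add: span_def)
qed

context nsys begin

lemma rrel_arity: "rrel n P \<Longrightarrow> n = m \<Longrightarrow> rrel m P"
  by simp

lemma rrel_span_pos:
  assumes base: "rrel 3 R" and RP: "\<And>x m y. x \<le> y \<Longrightarrow> R [x, m, y] \<longleftrightarrow> Pr (y - x) m" and j: "0 < j"
  shows "rrel (2 + j) (\<lambda>vs. Pr (span (set (drop 2 vs))) (vs ! 1))"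
proof -
  have ab: "rrel (2 + j) (\<lambda>vs. (\<forall>r\<in>{..<j}. vs ! (2 + r) \<le> vs ! (2 + a) \<and> vs ! (2 + b) \<le> vs ! (2 + r))
       \<and> R [vs ! (2 + b), vs ! 1, vs ! (2 + a)])" if a: "a < j" and b: "b < j" for a b
  proof -
    have "\<forall>r\<in>{..<j}. rrel (2 + j) (\<lambda>vs. vs ! (2 + r) \<le> vs ! (2 + a) \<and> vs ! (2 + b) \<le> vs ! (2 + r))"
    proof
      fix r assume "r \<in> {..<j}"
      then show "rrel (2 + j) (\<lambda>vs. vs ! (2 + r) \<le> vs ! (2 + a) \<and> vs ! (2 + b) \<le> vs ! (2 + r))"
        using rrel_and[OF atom2[OF rrel_le, of "2 + r" "2 + j" "2 + a"] atom2[OF rrel_le, of "2 + b" "2 + j" "2 + r"]] a b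
        by simp
    qed
    from rrel_allfin[OF finite_lessThan this]
    have "rrel (2 + j) (\<lambda>vs. \<forall>r\<in>{..<j}. vs ! (2 + r) \<le> vs ! (2 + a) \<and> vs ! (2 + b) \<le> vs ! (2 + r))" .
    moreover have "rrel (2 + j) (\<lambda>vs. R [vs ! (2 + b), vs ! 1, vs ! (2 + a)])"
      using atom3[OF base, of "2 + b" "2 + j" 1 "2 + a"] a b by simp
    ultimately show ?thesis by (rule rrel_and)
  qed
  have "\<forall>a\<in>{..<j}. rrel (2 + j) (\<lambda>vs. \<exists>b\<in>{..<j}. (\<forall>r\<in>{..<j}. vs ! (2 + r) \<le> vs ! (2 + a) \<and> vs ! (2 + b) \<le> vs ! (2 + r))
       \<and> R [vs ! (2 + b), vs ! 1, vs ! (2 + a)])"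
    using ab by (intro ballI rrel_exfin[OF finite_lessThan]) auto
  from rrel_exfin[OF finite_lessThan this]
  have "rrel (2 + j) (\<lambda>vs. \<exists>a\<in>{..<j}. \<exists>b\<in>{..<j}. (\<forall>r\<in>{..<j}. vs ! (2 + r) \<le> vs ! (2 + a) \<and> vs ! (2 + b) \<le> vs ! (2 + r))
       \<and> R [vs ! (2 + b), vs ! 1, vs ! (2 + a)])" .
  then show ?thesis
  proof (rule rrel_cong)
    fix vs :: "nat list" assume l: "length vs = 2 + j"
    define ks where "ks = drop 2 vs"
    have lk: "length ks = j" using l by (simp add: ks_def)
    have kn: "ks \<noteq> []" using lk j by auto
    have kv: "ks ! r = vs ! (2 + r)" for r using l by (simp add: ks_def)
    have "Pr (span (set ks)) (vs ! 1) \<longleftrightarrow>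
      (\<exists>a<j. \<exists>b<j. (\<forall>r<j. ks ! r \<le> ks ! a \<and> ks ! b \<le> ks ! r) \<and> Pr (ks ! a - ks ! b) (vs ! 1))"
      using span_char[OF kn, of "\<lambda>x. Pr x (vs ! 1)"] lk by simp
    also have "\<dots> \<longleftrightarrow> (\<exists>a<j. \<exists>b<j. (\<forall>r<j. ks ! r \<le> ks ! a \<and> ks ! b \<le> ks ! r) \<and> R [ks ! b, vs ! 1, ks ! a])"
    proof -
      have "(\<forall>r<j. ks ! r \<le> ks ! a \<and> ks ! b \<le> ks ! r) \<Longrightarrow> a < j \<Longrightarrow> Pr (ks ! a - ks ! b) (vs ! 1) = R [ks ! b, vs ! 1, ks ! a]" for a b
        using RP[of "ks ! b" "ks ! a" "vs ! 1"] by auto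
      then show ?thesis by blast
    qed
    finally show "(\<exists>a\<in>{..<j}. \<exists>b\<in>{..<j}. (\<forall>r\<in>{..<j}. vs ! (2 + r) \<le> vs ! (2 + a) \<and> vs ! (2 + b) \<le> vs ! (2 + r))
       \<and> R [vs ! (2 + b), vs ! 1, vs ! (2 + a)]) = Pr (span (set (drop 2 vs))) (vs ! 1)"
      unfolding ks_def[symmetric] kv Ball_def Bex_def lessThan_iff by blast
  qed
qed

lemma rrel_span0:
  assumes "rrel 1 (\<lambda>ys. Pr 0 (ys ! 0))"
  shows "rrel (2 + 0) (\<lambda>vs. Pr (span (set (drop 2 vs))) (vs ! 1))"
proof (rule rrel_cong)
  show "rrel (2 + 0) (\<lambda>zs. Pr 0 ([zs ! 1] ! 0))" using atom1[OF assms, of 1 "2 + 0"] by simp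
next
  fix xs :: "nat list" assume "length xs = 2 + 0"
  then have "drop 2 xs = []" by simp
  then show "Pr 0 ([xs ! 1] ! 0) = Pr (span (set (drop 2 xs))) (xs ! 1)" by (simp add: span_def)
qed

lemma rrel_span_eq: "rrel (2 + j) (\<lambda>vs. span (set (drop 2 vs)) = vs ! 1)"
proof (cases "j = 0")
  case True
  have z: "rrel 1 (\<lambda>ys. 0 = ys ! 0)" by (rule rrel_cong[OF rrel_zero]) auto
  show ?thesis unfolding True by (rule rrel_span0[of "\<lambda>x m. x = m", OF z])
next
  case False
  show ?thesis by (rule rrel_span_pos[of _ "\<lambda>x m. x = m", OF rrel_sum_eq]) (use False in auto)
qed

lemma rrel_span_le: "rrel (2 + j) (\<lambda>vs. span (set (drop 2 vs)) \<le> vs ! 1)"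
proof (cases "j = 0")
  case True
  have z: "rrel 1 (\<lambda>ys. 0 \<le> ys ! 0)" using rrel_true[of 1] by simp
  show ?thesis unfolding True by (rule rrel_span0[of "\<lambda>x m. x \<le> m", OF z])
next
  case False
  have b: "rrel 3 (\<lambda>ys. ys ! 2 \<le> ys ! 0 + ys ! 1)" using atom3[OF rrel_le_sum, of 2 3 0 1] by simp
  show ?thesis by (rule rrel_span_pos[of _ "\<lambda>x m. x \<le> m", OF b]) (use False in auto)
qed

lemma rrel_span_ge: "rrel (2 + j) (\<lambda>vs. vs ! 1 \<le> span (set (drop 2 vs)))"
proof (cases "j = 0")
  case True
  have z: "rrel 1 (\<lambda>ys. ys ! 0 \<le> 0)" using rrel_zero by simp
  show ?thesis unfolding True by (rule rrel_span0[of "\<lambda>x m. m \<le> x", OF z])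
next
  case False
  show ?thesis by (rule rrel_span_pos[of _ "\<lambda>x m. m \<le> x", OF rrel_sum_le]) (use False in auto)
qed

end


locale nsys2 = nsys rep for rep :: "nat \<Rightarrow> 'd::finite list" +
  fixes s :: "nat \<Rightarrow> 'b"
  assumes aut: "automatic_wrt rep s"
begin

lemma range_s_finite: "finite (range s)"
proof -
  obtain Q q0 and \<delta> :: "nat \<Rightarrow> 'd \<Rightarrow> nat" and \<tau> :: "nat \<Rightarrow> 'b" where A: "finite Q" "q0 \<in> Q" "\<forall>q\<in>Q. \<forall>a. \<delta> q a \<in> Q"
    "\<forall>n. s n = \<tau> (foldl \<delta> q0 (rep n))" using aut unfolding automatic_wrt_def by blast
  have "range s \<subseteq> \<tau> ` Q" using A foldl_closed[OF A(3) A(2)] by auto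
  then show ?thesis using A(1) finite_subset by blast
qed

lemma rrel_seq: "rrel 2 (\<lambda>ys. s (ys ! 0) = s (ys ! 1))"
proof -
  have "rrel 2 (\<lambda>ys. \<exists>b\<in>range s. s (ys ! 0) = b \<and> s (ys ! 1) = b)"
    using range_s_finite atom1[OF rrel_auto[OF aut], of 0 2] atom1[OF rrel_auto[OF aut], of 1 2]
    by (intro rrel_exfin rrel_and ballI) auto
  then show ?thesis by (rule rrel_cong) auto
qed

lemma rrel_fac: "rrel 3 (\<lambda>ys. fac s (ys ! 0) (ys ! 1) (ys ! 2))"
proof -
  define A6 where "A6 = (\<lambda>zs::nat list. zs ! 0 + zs ! 3 = zs ! 4 \<and> zs ! 1 + zs ! 3 = zs ! 5 \<and> s (zs ! 4) = s (zs ! 5))"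
  have h6: "rrel 6 A6" unfolding A6_def
    using rrel_and[OF atom3[OF rrel_sum_eq, of 0 6 3 4] rrel_and[OF atom3[OF rrel_sum_eq, of 1 6 3 5] atom2[OF rrel_seq, of 4 6 5]]]
    by simp
  have h5: "rrel 5 (\<lambda>xs. \<exists>x. A6 (xs @ [x]))" by (rule rrel_ex2[OF h6]) simp
  have h4: "rrel 4 (\<lambda>xs. \<exists>y. \<exists>x. A6 ((xs @ [y]) @ [x]))" by (rule rrel_ex2[OF h5]) simp
  have h4': "rrel 4 (\<lambda>xs. s (xs ! 0 + xs ! 3) = s (xs ! 1 + xs ! 3))"
    using h4 by (rule rrel_cong) (auto simp: A6_def nth_append)
  have b4: "rrel 4 (\<lambda>xs. xs ! 3 < xs ! 2 \<longrightarrow> s (xs ! 0 + xs ! 3) = s (xs ! 1 + xs ! 3))"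
    using rrel_imp[OF atom2[OF rrel_lt, of 3 4 2] h4'] by simp
  have "rrel 3 (\<lambda>xs. \<forall>x. (xs @ [x]) ! 3 < (xs @ [x]) ! 2 \<longrightarrow> s ((xs @ [x]) ! 0 + (xs @ [x]) ! 3) = s ((xs @ [x]) ! 1 + (xs @ [x]) ! 3))"
    using rrel_all[of 3] b4 by (simp add: eval_nat_numeral)
  then show ?thesis by (rule rrel_cong) (auto simp: nth_append fac_def)
qed

lemma rrel_attr: "rrel (1 + j) (\<lambda>vs. attr s (vs ! 0) (drop 1 vs))"
proof -
  have pa: "rrel (1 + j) (\<lambda>vs. \<forall>k\<in>set (drop 1 vs). k < vs ! 0)"
    by (rule rrel_allset) (use atom2[OF rrel_lt] in auto)
  define I where "I = (\<lambda>vs::nat list. (\<exists>k\<in>set (drop 4 vs). vs ! 3 \<le> k \<and> k < vs ! 3 + vs ! 2) \<and>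
      vs ! 3 + vs ! 2 \<le> vs ! 0 \<and> fac s (vs ! 3) (vs ! 1) (vs ! 2))"
  have i1: "rrel (4 + j) (\<lambda>vs. \<exists>k\<in>set (drop 4 vs). vs ! 3 \<le> k \<and> k < vs ! 3 + vs ! 2)"
  proof (rule rrel_exset, intro allI impI)
    fix r assume "r < j"
    then show "rrel (4 + j) (\<lambda>vs. vs ! 3 \<le> vs ! (4 + r) \<and> vs ! (4 + r) < vs ! 3 + vs ! 2)"
      using rrel_and[OF atom2[OF rrel_le, of 3 "4 + j" "4 + r"] atom3[OF rrel_lt_sum, of "4 + r" "4 + j" 3 2]] by simp
  qed
  have a2: "rrel (4 + j) (\<lambda>vs. vs ! 3 + vs ! 2 \<le> vs ! 0)" using atom3[OF rrel_sum_le, of 3 "4 + j" 2 0] by simp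
  have a3: "rrel (4 + j) (\<lambda>vs. fac s (vs ! 3) (vs ! 1) (vs ! 2))" using atom3[OF rrel_fac, of 3 "4 + j" 1 2] by simp
  have "rrel (4 + j) I" unfolding I_def using rrel_and[OF i1 rrel_and[OF a2 a3]] .
  then have hI: "rrel (Suc (3 + j)) I" by (rule rrel_arity) simp
  have e1: "rrel (3 + j) (\<lambda>vs. \<exists>x. I (ins 3 x vs))" using rrel_ex_at[OF hI] .
  have g: "rrel (3 + j) (\<lambda>vs. 0 < vs ! 2 \<and> vs ! 1 + vs ! 2 \<le> vs ! 0)"
    using rrel_and[OF atom1[OF rrel_pos, of 2 "3 + j"] atom3[OF rrel_sum_le, of 1 "3 + j" 2 0]] by simp
  have h3: "rrel (Suc (2 + j)) (\<lambda>vs. (0 < vs ! 2 \<and> vs ! 1 + vs ! 2 \<le> vs ! 0) \<longrightarrow> (\<exists>x. I (ins 3 x vs)))"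
    by (rule rrel_arity[OF rrel_imp[OF g e1]]) simp
  have h2: "rrel (Suc (1 + j)) (\<lambda>ws. \<forall>y. (0 < ins 2 y ws ! 2 \<and> ins 2 y ws ! 1 + ins 2 y ws ! 2 \<le> ins 2 y ws ! 0) \<longrightarrow> (\<exists>x. I (ins 3 x (ins 2 y ws))))"
    by (rule rrel_arity[OF rrel_all_at[OF h3]]) simp
  have h1: "rrel (1 + j) (\<lambda>vs. \<forall>z y. (0 < ins 2 y (ins 1 z vs) ! 2 \<and> ins 2 y (ins 1 z vs) ! 1 + ins 2 y (ins 1 z vs) ! 2 \<le> ins 2 y (ins 1 z vs) ! 0)
      \<longrightarrow> (\<exists>x. I (ins 3 x (ins 2 y (ins 1 z vs)))))"
    using rrel_all_at[OF h2] .
  have pb: "rrel (1 + j) (\<lambda>vs. \<forall>i l. 0 < l \<and> i + l \<le> vs ! 0 \<longrightarrow>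
      (\<exists>p. (\<exists>k\<in>set (drop 1 vs). p \<le> k \<and> k < p + l) \<and> p + l \<le> vs ! 0 \<and> fac s p i l))"
    using h1
  proof (rule rrel_cong)
    fix vs :: "nat list" assume l: "length vs = 1 + j"
    have l1: "length (ins 1 z vs) = 2 + j" for z using l by (simp add: ins_len)
    have l2: "length (ins 2 y (ins 1 z vs)) = 3 + j" for y z using l by (simp add: ins_len)
    have n1: "ins 1 z vs ! 0 = vs ! 0" "ins 1 z vs ! 1 = z" for z using l by (simp_all add: ins_nth)
    have n2: "ins 2 y (ins 1 z vs) ! 0 = vs ! 0" "ins 2 y (ins 1 z vs) ! 1 = z" "ins 2 y (ins 1 z vs) ! 2 = y" for y z
      using l1 n1 by (simp_all add: ins_nth)
    have n3: "ins 3 x (ins 2 y (ins 1 z vs)) ! 0 = vs ! 0" "ins 3 x (ins 2 y (ins 1 z vs)) ! 1 = z"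
      "ins 3 x (ins 2 y (ins 1 z vs)) ! 2 = y" "ins 3 x (ins 2 y (ins 1 z vs)) ! 3 = x" for x y z
      using l2 n2 by (simp_all add: ins_nth)
    have d: "drop 4 (ins 3 x (ins 2 y (ins 1 z vs))) = drop 1 vs" for x y z
      using l l1 l2 by (simp add: ins_drop')
    show "(\<forall>z y. (0 < ins 2 y (ins 1 z vs) ! 2 \<and> ins 2 y (ins 1 z vs) ! 1 + ins 2 y (ins 1 z vs) ! 2 \<le> ins 2 y (ins 1 z vs) ! 0)
      \<longrightarrow> (\<exists>x. I (ins 3 x (ins 2 y (ins 1 z vs))))) =
      (\<forall>i l. 0 < l \<and> i + l \<le> vs ! 0 \<longrightarrow>
      (\<exists>p. (\<exists>k\<in>set (drop 1 vs). p \<le> k \<and> k < p + l) \<and> p + l \<le> vs ! 0 \<and> fac s p i l))"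
      unfolding I_def n2 n3 d by simp
  qed
  show ?thesis using rrel_and[OF pa pb] by (rule rrel_cong) (simp add: attr_def)
qed

lemma rrel_atte: "rrel 1 (\<lambda>vs. atte s j (vs ! 0))"
proof -
  have "rrel (1 + j) (\<lambda>ws. distinct (drop 1 ws) \<and> attr s (ws ! 0) (drop 1 ws))"
    using rrel_and[OF rrel_distinct rrel_attr] .
  from rrel_exs[OF this] show ?thesis
    by (rule rrel_cong) (auto simp: atte_def nth_append)
qed

lemma rrel_gam: "rrel 1 (\<lambda>vs. gam s j (vs ! 0))"
proof -
  have "rrel 1 (\<lambda>vs. atte s j (vs ! 0) \<and> (\<forall>j'\<in>{..<j}. \<not> atte s j' (vs ! 0)))"
    by (intro rrel_and rrel_atte rrel_allfin ballI rrel_not) auto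
  then show ?thesis by (rule rrel_cong) (auto simp: gam_def)
qed

end


lemma prefix_len[simp]: "length (prefix_of_seq s n) = n"
  by (simp add: prefix_of_seq_def)

lemma take_drop_prefix: "p + l \<le> n \<Longrightarrow> take l (drop p (prefix_of_seq s n)) = map s [p..<p + l]"
  by (simp add: prefix_of_seq_def drop_map take_map take_upt)

lemma fac_iff: "map s [p..<p + l] = map s [i..<i + l] \<longleftrightarrow> fac s p i l"
  unfolding fac_def by (auto simp: list_eq_iff_nth_eq)

lemma sa_iff: "string_attractor (prefix_of_seq s n) (set ks) \<longleftrightarrow> attr s n ks"
proof -
  have e: "take l (drop p (prefix_of_seq s n)) = take l (drop i (prefix_of_seq s n)) \<longleftrightarrow> fac s p i l"
    if "p + l \<le> n" "i + l \<le> n" for p i l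
    using that by (simp add: take_drop_prefix fac_iff)
  show ?thesis unfolding string_attractor_def attr_def prefix_len
  proof (intro iffI conjI allI impI)
    assume a: "set ks \<subseteq> {..<n} \<and> (\<forall>i l. 0 < l \<and> i + l \<le> n \<longrightarrow> (\<exists>p k. k \<in> set ks \<and> p \<le> k \<and> k < p + l \<and> p + l \<le> n \<and>
        take l (drop p (prefix_of_seq s n)) = take l (drop i (prefix_of_seq s n))))"
    then show "\<forall>k\<in>set ks. k < n" by auto
    fix i l assume il: "0 < l \<and> i + l \<le> n"
    then obtain p k where "k \<in> set ks" "p \<le> k" "k < p + l" "p + l \<le> n"
      "take l (drop p (prefix_of_seq s n)) = take l (drop i (prefix_of_seq s n))" using a by blast
    then show "\<exists>p. (\<exists>k\<in>set ks. p \<le> k \<and> k < p + l) \<and> p + l \<le> n \<and> fac s p i l" using e il by blast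
  next
    assume a: "(\<forall>k\<in>set ks. k < n) \<and> (\<forall>i l. 0 < l \<and> i + l \<le> n \<longrightarrow> (\<exists>p. (\<exists>k\<in>set ks. p \<le> k \<and> k < p + l) \<and> p + l \<le> n \<and> fac s p i l))"
    then show "set ks \<subseteq> {..<n}" by auto
    fix i l assume il: "0 < l \<and> i + l \<le> n"
    then obtain p k where "k \<in> set ks" "p \<le> k" "k < p + l" "p + l \<le> n" "fac s p i l" using a by blast
    then show "\<exists>p k. k \<in> set ks \<and> p \<le> k \<and> k < p + l \<and> p + l \<le> n \<and>
        take l (drop p (prefix_of_seq s n)) = take l (drop i (prefix_of_seq s n))" using e il by blast
  qed
qed

lemma sa_list:
  assumes "string_attractor (prefix_of_seq s n) S"
  shows "\<exists>ks. set ks = S \<and> distinct ks \<and> length ks = card S"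
proof -
  have "S \<subseteq> {..<n}" using assms by (simp add: string_attractor_def)
  then have "finite S" using finite_subset by blast
  then show ?thesis by (intro exI[of _ "sorted_list_of_set S"]) simp
qed

lemma E_iff: "(\<exists>S. string_attractor (prefix_of_seq s n) S \<and> card S = j) \<longleftrightarrow> atte s j n"
proof
  assume "\<exists>S. string_attractor (prefix_of_seq s n) S \<and> card S = j"
  then obtain S where S: "string_attractor (prefix_of_seq s n) S" "card S = j" by blast
  then obtain ks where "set ks = S" "distinct ks" "length ks = card S" using sa_list by blast
  then show "atte s j n" using S sa_iff unfolding atte_def by metis
next
  assume "atte s j n"
  then obtain ks where "length ks = j" "distinct ks" "attr s n ks" unfolding atte_def by blast
  then show "\<exists>S. string_attractor (prefix_of_seq s n) S \<and> card S = j"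
    using sa_iff distinct_card by metis
qed

definition SX :: "(nat \<Rightarrow> 'b) \<Rightarrow> nat \<Rightarrow> nat set" where
  "SX s n = {span S | S. string_attractor (prefix_of_seq s n) S \<and> card S = gamma (prefix_of_seq s n)}"

lemma SX_eq: "SX s n = {span (set ks) | ks. length ks = gamma (prefix_of_seq s n) \<and> distinct ks \<and> attr s n ks}"
proof (intro set_eqI iffI)
  fix x assume "x \<in> SX s n"
  then obtain S where S: "x = span S" "string_attractor (prefix_of_seq s n) S" "card S = gamma (prefix_of_seq s n)"
    unfolding SX_def by blast
  then obtain ks where k: "set ks = S" "distinct ks" "length ks = card S" using sa_list by blast
  then have "x = span (set ks) \<and> length ks = gamma (prefix_of_seq s n) \<and> distinct ks \<and> attr s n ks"
    using S sa_iff[of s n ks] by auto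
  then show "x \<in> {span (set ks) | ks. length ks = gamma (prefix_of_seq s n) \<and> distinct ks \<and> attr s n ks}"
    by blast
next
  fix x assume "x \<in> {span (set ks) | ks. length ks = gamma (prefix_of_seq s n) \<and> distinct ks \<and> attr s n ks}"
  then obtain ks where k: "x = span (set ks)" "length ks = gamma (prefix_of_seq s n)" "distinct ks" "attr s n ks" by blast
  have "string_attractor (prefix_of_seq s n) (set ks)" using k(4) sa_iff by blast
  moreover have "card (set ks) = gamma (prefix_of_seq s n)" using k(2,3) distinct_card by metis
  ultimately show "x \<in> SX s n" unfolding SX_def using k(1) by blast
qed

lemma gamma_facts:
  assumes "\<exists>S. string_attractor (prefix_of_seq s n) S \<and> card S \<le> C"
  shows "gamma (prefix_of_seq s n) \<le> C" "atte s (gamma (prefix_of_seq s n)) n"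
    "\<And>j. gam s j n \<longleftrightarrow> j = gamma (prefix_of_seq s n)"
proof -
  define E where "E c = (\<exists>S. string_attractor (prefix_of_seq s n) S \<and> card S = c)" for c
  obtain S0 where S0: "string_attractor (prefix_of_seq s n) S0" "card S0 \<le> C" using assms by blast
  have g: "gamma (prefix_of_seq s n) = (LEAST c. E c)" unfolding gamma_def E_def ..
  have E0: "E (card S0)" using S0 E_def by blast
  have EE: "E c \<longleftrightarrow> atte s c n" for c unfolding E_def by (rule E_iff)
  show "gamma (prefix_of_seq s n) \<le> C" using Least_le[of E, OF E0] S0 g by simp
  have Eg: "E (LEAST c. E c)" by (rule LeastI[of E, OF E0])
  then show "atte s (gamma (prefix_of_seq s n)) n" using EE g by simp
  fix j
  show "gam s j n \<longleftrightarrow> j = gamma (prefix_of_seq s n)"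
  proof
    assume "gam s j n"
    then have Ej: "E j" and nE: "\<forall>j'<j. \<not> E j'" unfolding gam_def EE by auto
    have "(LEAST c. E c) \<le> j" by (rule Least_le[of E, OF Ej])
    moreover have "\<not> (LEAST c. E c) < j" using Eg nE by blast
    ultimately show "j = gamma (prefix_of_seq s n)" unfolding g by simp
  next
    assume jg: "j = gamma (prefix_of_seq s n)"
    have a: "atte s j n" using Eg EE g jg by simp
    have b: "\<not> atte s j' n" if "j' < j" for j' using not_less_Least[of j' E] that EE g jg by simp
    show "gam s j n" by (simp add: gam_def a b)
  qed
qed

lemma SX_fin: "finite (SX s n)"
proof -
  have "SX s n \<subseteq> span ` Pow {..<n}"
  proof
    fix x assume "x \<in> SX s n"
    then obtain S where S: "x = span S" "string_attractor (prefix_of_seq s n) S" unfolding SX_def by blast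
    then have "S \<subseteq> {..<n}" unfolding string_attractor_def by simp
    then show "x \<in> span ` Pow {..<n}" using S(1) by blast
  qed
  then show ?thesis using finite_subset by blast
qed

lemma SX_ne:
  assumes "\<exists>S. string_attractor (prefix_of_seq s n) S \<and> card S \<le> C"
  shows "SX s n \<noteq> {}"
  using gamma_facts(2)[OF assms] unfolding SX_eq atte_def by blast

context nsys2 begin

lemma rrel_attr2: "rrel (2 + j) (\<lambda>ws. attr s (ws ! 0) (drop 2 ws))"
proof -
  have "rrel (2 + j) (\<lambda>xs. attr s (map (nth xs) (0 # [2..<2 + j]) ! 0) (drop 1 (map (nth xs) (0 # [2..<2 + j]))))"
    by (rule rrel_sel2[OF rrel_attr[of j]]) auto
  then show ?thesis
  proof (rule rrel_cong)
    fix xs :: "nat list" assume l: "length xs = 2 + j"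
    have "map (nth xs) [2..<2 + j] = drop 2 xs" using map_nth_upt_drop[of xs 2] l by simp
    then show "attr s (map (nth xs) (0 # [2..<2 + j]) ! 0) (drop 1 (map (nth xs) (0 # [2..<2 + j]))) = attr s (xs ! 0) (drop 2 xs)"
      by simp
  qed
qed

lemma rrel_ex_ks:
  assumes "rrel (2 + j) (\<lambda>ws. Q (ws ! 0) (ws ! 1) (drop 2 ws))"
  shows "rrel 2 (\<lambda>vs. \<exists>ks. length ks = j \<and> Q (vs ! 0) (vs ! 1) ks)"
  using rrel_exs[OF assms] by (rule rrel_cong) (auto simp: nth_append)

lemma rrel_all_ks:
  assumes "rrel (2 + j) (\<lambda>ws. Q (ws ! 0) (ws ! 1) (drop 2 ws))"
  shows "rrel 2 (\<lambda>vs. \<forall>ks. length ks = j \<longrightarrow> Q (vs ! 0) (vs ! 1) ks)"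
  using rrel_alls[OF assms] by (rule rrel_cong) (auto simp: nth_append)

lemma main_sync:
  assumes C: "\<forall>n. \<exists>S. string_attractor (prefix_of_seq s n) S \<and> card S \<le> C"
  shows "synchronized rep (\<lambda>n. maxspan (prefix_of_seq s n)) \<and>
         synchronized rep (\<lambda>n. minspan (prefix_of_seq s n))"
proof -
  define B where "B j n ks \<longleftrightarrow> distinct ks \<and> attr s n ks" for j n ks
  have rB: "rrel (2 + j) (\<lambda>ws. distinct (drop 2 ws) \<and> attr s (ws ! 0) (drop 2 ws))" for j
    using rrel_and[OF rrel_distinct rrel_attr2] .
  define RM where "RM vs \<longleftrightarrow> (\<exists>j\<in>{..C}. gam s j (vs ! 0) \<and>
     (\<exists>ks. length ks = j \<and> (distinct ks \<and> attr s (vs ! 0) ks \<and> span (set ks) = vs ! 1)) \<and>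
     (\<forall>ks. length ks = j \<longrightarrow> (distinct ks \<and> attr s (vs ! 0) ks \<longrightarrow> span (set ks) \<le> vs ! 1)))" for vs
  define Rm where "Rm vs \<longleftrightarrow> (\<exists>j\<in>{..C}. gam s j (vs ! 0) \<and>
     (\<exists>ks. length ks = j \<and> (distinct ks \<and> attr s (vs ! 0) ks \<and> span (set ks) = vs ! 1)) \<and>
     (\<forall>ks. length ks = j \<longrightarrow> (distinct ks \<and> attr s (vs ! 0) ks \<longrightarrow> vs ! 1 \<le> span (set ks))))" for vs
  have g2: "rrel 2 (\<lambda>vs. gam s j (vs ! 0))" for j using atom1[OF rrel_gam, of 0 2] by simp
  have ex2: "rrel 2 (\<lambda>vs. \<exists>ks. length ks = j \<and> (distinct ks \<and> attr s (vs ! 0) ks \<and> span (set ks) = vs ! 1))" for j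
    by (rule rrel_ex_ks[of j "\<lambda>n m ks. distinct ks \<and> attr s n ks \<and> span (set ks) = m"])
       (use rrel_and[OF rB rrel_span_eq] in simp)
  have al2: "rrel 2 (\<lambda>vs. \<forall>ks. length ks = j \<longrightarrow> (distinct ks \<and> attr s (vs ! 0) ks \<longrightarrow> span (set ks) \<le> vs ! 1))" for j
    by (rule rrel_all_ks[of j "\<lambda>n m ks. distinct ks \<and> attr s n ks \<longrightarrow> span (set ks) \<le> m"])
       (use rrel_imp[OF rB rrel_span_le] in simp)
  have al2': "rrel 2 (\<lambda>vs. \<forall>ks. length ks = j \<longrightarrow> (distinct ks \<and> attr s (vs ! 0) ks \<longrightarrow> vs ! 1 \<le> span (set ks)))" for j
    by (rule rrel_all_ks[of j "\<lambda>n m ks. distinct ks \<and> attr s n ks \<longrightarrow> m \<le> span (set ks)"])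
       (use rrel_imp[OF rB rrel_span_ge] in simp)
  have rRM: "rrel 2 RM" unfolding RM_def
    by (rule rrel_exfin[OF finite_atMost]) (use rrel_and[OF g2 rrel_and[OF ex2 al2]] in blast)
  have rRm: "rrel 2 Rm" unfolding Rm_def
    by (rule rrel_exfin[OF finite_atMost]) (use rrel_and[OF g2 rrel_and[OF ex2 al2']] in blast)
  have key: "(\<exists>j\<in>{..C}. gam s j n \<and> Pj j) \<longleftrightarrow> Pj (gamma (prefix_of_seq s n))" for n Pj
    using gamma_facts[OF C[rule_format, of n]] by auto
  have mem: "m \<in> SX s n \<longleftrightarrow> (\<exists>ks. length ks = gamma (prefix_of_seq s n) \<and> (distinct ks \<and> attr s n ks \<and> span (set ks) = m))" for n m
    unfolding SX_eq by blast
  have allx: "(\<forall>x\<in>SX s n. Q x) \<longleftrightarrow> (\<forall>ks. length ks = gamma (prefix_of_seq s n) \<longrightarrow> (distinct ks \<and> attr s n ks \<longrightarrow> Q (span (set ks))))" for n Q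
    unfolding SX_eq by blast
  have mx: "maxspan (prefix_of_seq s n) = Max (SX s n)" "minspan (prefix_of_seq s n) = Min (SX s n)" for n
    unfolding maxspan_def minspan_def SX_def by simp_all
  have "rrel 2 (\<lambda>ys. ys ! 1 = maxspan (prefix_of_seq s (ys ! 0)))"
    using rRM
  proof (rule rrel_cong)
    fix ys :: "nat list"
    have "RM ys \<longleftrightarrow> ys ! 1 \<in> SX s (ys ! 0) \<and> (\<forall>x\<in>SX s (ys ! 0). x \<le> ys ! 1)"
      unfolding RM_def key mem allx ..
    also have "\<dots> \<longleftrightarrow> Max (SX s (ys ! 0)) = ys ! 1"
      using Max_eq_iff[OF SX_fin SX_ne[OF C[rule_format]]] by metis
    finally show "RM ys = (ys ! 1 = maxspan (prefix_of_seq s (ys ! 0)))" unfolding mx by auto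
  qed
  moreover have "rrel 2 (\<lambda>ys. ys ! 1 = minspan (prefix_of_seq s (ys ! 0)))"
    using rRm
  proof (rule rrel_cong)
    fix ys :: "nat list"
    have "Rm ys \<longleftrightarrow> ys ! 1 \<in> SX s (ys ! 0) \<and> (\<forall>x\<in>SX s (ys ! 0). ys ! 1 \<le> x)"
      unfolding Rm_def key mem allx ..
    also have "\<dots> \<longleftrightarrow> Min (SX s (ys ! 0)) = ys ! 1"
      using Min_eq_iff[OF SX_fin SX_ne[OF C[rule_format]]] by metis
    finally show "Rm ys = (ys ! 1 = minspan (prefix_of_seq s (ys ! 0)))" unfolding mx by auto
  qed
  ultimately show ?thesis
    using sync_of_rrel[of "\<lambda>n. maxspan (prefix_of_seq s n)"] sync_of_rrel[of "\<lambda>n. minspan (prefix_of_seq s n)"] by simp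
qed

end

theorem theorem9:
  fixes rep :: "nat \<Rightarrow> 'd::finite list" and s :: "nat \<Rightarrow> 'b"
  assumes "regular_numeration rep"
    and "automatic_wrt rep s"
    and "\<exists>c::nat. \<forall>n. \<exists>S. string_attractor (prefix_of_seq s n) S \<and> card S \<le> c"
  shows "synchronized rep (\<lambda>n. maxspan (prefix_of_seq s n)) \<and>
         synchronized rep (\<lambda>n. minspan (prefix_of_seq s n))"
proof -
  interpret nsys2 rep s
    using assms(1,2) unfolding regular_numeration_def by unfold_locales auto
  obtain C where "\<forall>n. \<exists>S. string_attractor (prefix_of_seq s n) S \<and> card S \<le> C" using assms(3) by blast
  then show ?thesis by (rule main_sync)
qed


end
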